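(* Suppose that for every $e\in E$ the restriction $p_e|_{K_{i(e)}}$ is Dini-continuous and that there exists $\delta>0$ with $p_e|_{K_{i(e)}}\ge\delta$ for all $e\in E$. Let $x_i,y_i\in K_i$ for all $1\le i\le N$ and let $\nu$ be a Borel probability measure on $K$. Then: (i) the limit $F_{x_1\dots x_N}(\sigma)=\lim_{m\to-\infty}Y^{x_1\dots x_N}_{m0}(\sigma)$ exists for all $\sigma$ outside a set of $\Phi(\nu)$-outer measure zero; (ii) $F_{x_1\dots x_N}=F_{y_1\dots y_N}$ outside a set of $\Phi(\nu)$-outer measure zero; (iii) there exist closed subsets $Q_1\subset Q_2\subset\cdots\subset\Sigma$ with $\lim_{k\to\infty}\Phi(\nu)(\Sigma\setminus Q_k)=0$ and constants $\alpha,C>0$ such that for every $k$ there is $\delta_k>0$ with: $F_{x_1\dots x_N}$ is defined on $Q_k$ and $d(F_{x_1\dots x_N}(\sigma),F_{x_1\dots x_N}(\sigma'))\le C\,d'(\sigma,\sigma')^\alpha$ for all $\sigma,\sigma'\in Q_k$ with $d'(\sigma,\sigma')\le\delta_k$.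
   Context: A contractive Markov system (CMS) with average contracting rate $0<a<1$ consists of: a finite directed multigraph $(V,E,i,t)$ with vertex set $V=\{1,\dots,N\}$, finite edge set $E$, and maps $i,t:E\to V$ giving the initial and terminal vertex of each edge; a complete metric space $(K,d)$ partitioned into non-empty Borel sets $K_1,\dots,K_N$; Borel measurable maps $w_e:K\to K$ ($e\in E$) with $w_e(K_{i(e)})\subset K_{t(e)}$; Borel measurable functions $p_e:K\to[0,\infty)$ with $\sum_{e\in E}p_e(x)=1$ for all $x\in K$ and $p_e=0$ on $K\setminus K_{i(e)}$; and such that $\sum_{e\in E}p_e(x)d(w_ex,w_ey)\leq a\,d(x,y)$ for all $x,y\in K_j$, $j=1,\dots,N$. A function $f:(X,d)\to\mathbb{R}$ is Dini-continuous if $\int_0^c\frac{\phi(t)}{t}dt<\infty$ for some $c>0$, where $\phi(t):=\sup\{|f(x)-f(y)|:d(x,y)\le t,\ x,y\in X\}$. Let $\Sigma:=E^{\mathbb{Z}}$ with metric $d'(\sigma,\sigma'):=(1/2)^k$ where $k$ is the largest integer with $\sigma_j=\sigma'_j$ for all $|j|<k$. For $m\le n$ the cylinder $_m[e_m,\dots,e_n]:=\{\sigma\in\Sigma:\sigma_j=e_j,\ m\le j\le n\}$. For an integer $m\le 1$, $\mathcal{A}_m$ is the $\sigma$-algebra generated by the cylinders $_m[e_m,\dots,e_n]$, $n\ge m$. For $x\in K$, $P^m_x$ is the probability measure on $(\Sigma,\mathcal{A}_m)$ with $P^m_x(_m[e_m,\dots,e_n])=p_{e_m}(x)\,p_{e_{m+1}}(w_{e_m}x)\cdots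 p_{e_n}(w_{e_{n-1}}\circ\cdots\circ w_{e_m}x)$. For a Borel probability measure $\nu$ on $K$, $\Phi_m(\nu)(A)=\int P^m_x(A)\,d\nu(x)$ for $A\in\mathcal{A}_m$. For $B\subset\Sigma$ let $\mathcal{C}(B)$ be the set of sequences $(A_m)_{m\le 0}$ with $A_m\in\mathcal{A}_m$ and $B\subset\bigcup_{m\le 0}A_m$, and $\Phi(\nu)(B):=\inf\{\sum_{m\le 0}\Phi_m(\nu)(A_m):(A_m)_{m\le0}\in\mathcal{C}(B)\}$ (an outer measure on $\Sigma$). For fixed $x_i\in K_i$, $Y^{x_1\dots x_N}_{m0}(\sigma):=w_{\sigma_0}\circ\cdots\circ w_{\sigma_m}(x_{i(\sigma_m)})$ for $m\le 0$, and $F_{x_1\dots x_N}(\sigma):=\lim_{m\to-\infty}Y^{x_1\dots x_N}_{m0}(\sigma)$ wherever this limit exists (the coding map). *)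

theory Defs
  imports "HOL-Probability.Probability"
begin

text \<open>Edges form a finite type 'e (E = UNIV); vertices are 1..N;
  K is the whole complete metric space type 'a, partitioned by Kp 1, ..., Kp N.\<close>

definition cms :: "nat \<Rightarrow> ('e::finite \<Rightarrow> nat) \<Rightarrow> ('e \<Rightarrow> nat) \<Rightarrow> (nat \<Rightarrow> 'a::complete_space set)
   \<Rightarrow> ('e \<Rightarrow> 'a \<Rightarrow> 'a) \<Rightarrow> ('e \<Rightarrow> 'a \<Rightarrow> real) \<Rightarrow> real \<Rightarrow> bool" where
  "cms N ii tt Kp w p a \<longleftrightarrow>
     0 < a \<and> a < 1 \<and>
     (\<forall>e. ii e \<in> {1..N} \<and> tt e \<in> {1..N}) \<and>
     (\<forall>j\<in>{1..N}. Kp j \<noteq> {} \<and> Kp j \<in> sets borel) \<and>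
     (\<forall>j\<in>{1..N}. \<forall>k\<in>{1..N}. j \<noteq> k \<longrightarrow> Kp j \<inter> Kp k = {}) \<and>
     (\<Union>j\<in>{1..N}. Kp j) = UNIV \<and>
     (\<forall>e. w e \<in> borel_measurable borel \<and> w e ` Kp (ii e) \<subseteq> Kp (tt e)) \<and>
     (\<forall>e. p e \<in> borel_measurable borel \<and> (\<forall>x. 0 \<le> p e x) \<and> (\<forall>x. x \<notin> Kp (ii e) \<longrightarrow> p e x = 0)) \<and>
     (\<forall>x. (\<Sum>e\<in>UNIV. p e x) = 1) \<and>
     (\<forall>j\<in>{1..N}. \<forall>x\<in>Kp j. \<forall>y\<in>Kp j. (\<Sum>e\<in>UNIV. p e x * dist (w e x) (w e y)) \<le> a * dist x y)"

definition modcont :: "'a::metric_space set \<Rightarrow> ('a \<Rightarrow> real) \<Rightarrow> real \<Rightarrow> ennreal" where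
  "modcont S f t = (SUP xy \<in> {(x,y). x \<in> S \<and> y \<in> S \<and> dist x y \<le> t}. ennreal \<bar>f (fst xy) - f (snd xy)\<bar>)"

definition dini_continuous_on :: "'a::metric_space set \<Rightarrow> ('a \<Rightarrow> real) \<Rightarrow> bool" where
  "dini_continuous_on S f \<longleftrightarrow>
     (\<exists>c>0. (\<integral>\<^sup>+ t. indicator {0<..c} t * (modcont S f t / ennreal t) \<partial>lborel) < \<infinity>)"

definition dprime :: "(int \<Rightarrow> 'e) \<Rightarrow> (int \<Rightarrow> 'e) \<Rightarrow> real" where
  "dprime s s' = (if s = s' then 0
     else (1/2) ^ (GREATEST k::nat. \<forall>j::int. \<bar>j\<bar> < int k \<longrightarrow> s j = s' j))"

definition dprime_closed :: "(int \<Rightarrow> 'e) set \<Rightarrow> bool" where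
  "dprime_closed Q \<longleftrightarrow>
     (\<forall>s \<sigma>. (\<forall>n. s n \<in> Q) \<longrightarrow> (\<lambda>n. dprime (s n) \<sigma>) \<longlonglongrightarrow> 0 \<longrightarrow> \<sigma> \<in> Q)"

text \<open>Cylinder m[e_m, ..., e_n], with the word e_m..e_n given as a nonempty list.\<close>
definition cyl :: "int \<Rightarrow> 'e list \<Rightarrow> (int \<Rightarrow> 'e) set" where
  "cyl m es = {\<sigma>. \<forall>k<length es. \<sigma> (m + int k) = es ! k}"

definition Asig :: "int \<Rightarrow> (int \<Rightarrow> 'e) set set" where
  "Asig m = sigma_sets UNIV {cyl m es | es. es \<noteq> []}"

fun pweight :: "('e \<Rightarrow> 'a \<Rightarrow> 'a) \<Rightarrow> ('e \<Rightarrow> 'a \<Rightarrow> real) \<Rightarrow> 'e list \<Rightarrow> 'a \<Rightarrow> real" where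
  "pweight w p [] x = 1"
| "pweight w p (e # es) x = p e x * pweight w p es (w e x)"

definition Pm :: "('e \<Rightarrow> 'a \<Rightarrow> 'a) \<Rightarrow> ('e \<Rightarrow> 'a \<Rightarrow> real) \<Rightarrow> int \<Rightarrow> 'a \<Rightarrow> (int \<Rightarrow> 'e) measure" where
  "Pm w p m x = (SOME \<mu>. prob_space \<mu> \<and> space \<mu> = UNIV \<and> sets \<mu> = Asig m \<and>
       (\<forall>es. es \<noteq> [] \<longrightarrow> measure \<mu> (cyl m es) = pweight w p es x))"

definition Phim :: "('e \<Rightarrow> 'a \<Rightarrow> 'a) \<Rightarrow> ('e \<Rightarrow> 'a \<Rightarrow> real) \<Rightarrow> 'a measure \<Rightarrow> int \<Rightarrow> (int \<Rightarrow> 'e) set \<Rightarrow> ennreal" where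
  "Phim w p \<nu> m A = (\<integral>\<^sup>+ x. emeasure (Pm w p m x) A \<partial>\<nu>)"

text \<open>Outer measure Phi(nu); covers (A_m)_{m \<le> 0} are indexed by n with m = -n.\<close>
definition Phi :: "('e \<Rightarrow> 'a \<Rightarrow> 'a) \<Rightarrow> ('e \<Rightarrow> 'a \<Rightarrow> real) \<Rightarrow> 'a measure \<Rightarrow> (int \<Rightarrow> 'e) set \<Rightarrow> ennreal" where
  "Phi w p \<nu> B = (INF A \<in> {A :: nat \<Rightarrow> (int \<Rightarrow> 'e) set. (\<forall>n. A n \<in> Asig (- int n)) \<and> B \<subseteq> (\<Union>n. A n)}.
                    (\<Sum>n. Phim w p \<nu> (- int n) (A n)))"

fun wcomp :: "('e \<Rightarrow> 'a \<Rightarrow> 'a) \<Rightarrow> (int \<Rightarrow> 'e) \<Rightarrow> nat \<Rightarrow> 'a \<Rightarrow> 'a" where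
  "wcomp w s 0 z = w (s 0) z"
| "wcomp w s (Suc n) z = wcomp w s n (w (s (- int (Suc n))) z)"

text \<open>Y^{x_1..x_N}_{m0}(s) with m = -n.\<close>
definition Y :: "('e \<Rightarrow> nat) \<Rightarrow> ('e \<Rightarrow> 'a \<Rightarrow> 'a) \<Rightarrow> (nat \<Rightarrow> 'a) \<Rightarrow> (int \<Rightarrow> 'e) \<Rightarrow> nat \<Rightarrow> 'a" where
  "Y ii w xs s n = wcomp w s n (xs (ii (s (- int n))))"

end

theory Submission
  imports Defs
begin


definition enumL :: "'e::finite list" where "enumL = (SOME l. distinct l \<and> set l = UNIV)"

lemma enumL: "distinct (enumL::'e::finite list) \<and> set enumL = (UNIV::'e set)"
proof -
  obtain l :: "'e list" where "set l = UNIV \<and> distinct l" using finite_distinct_list[OF finite[of "UNIV::'e set"]] by blast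
  then have "\<exists>l::'e list. distinct l \<and> set l = UNIV" by blast
  then show ?thesis unfolding enumL_def by (rule someI_ex)
qed

definition Fcum :: "('e::finite \<Rightarrow> 'a \<Rightarrow> real) \<Rightarrow> 'a \<Rightarrow> nat \<Rightarrow> real" where
  "Fcum p y i = (\<Sum>j<i. p (enumL!j) y)"

definition Iv :: "('e::finite \<Rightarrow> 'a \<Rightarrow> real) \<Rightarrow> 'a \<Rightarrow> nat \<Rightarrow> real set" where
  "Iv p y i = {Fcum p y i ..< Fcum p y (Suc i)}"

definition ch :: "('e::finite \<Rightarrow> 'a \<Rightarrow> real) \<Rightarrow> 'a \<Rightarrow> real \<Rightarrow> 'e" where
  "ch p y u = (if \<exists>i<length (enumL::'e list). u \<in> Iv p y i
      then enumL ! (LEAST i. i < length (enumL::'e list) \<and> u \<in> Iv p y i) else enumL ! 0)"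

locale probs =
  fixes p :: "'e::finite \<Rightarrow> 'a \<Rightarrow> real"
  assumes pnn: "\<And>e y. 0 \<le> p e y" and psum: "\<And>y. (\<Sum>e\<in>UNIV. p e y) = 1"
begin

lemma enumL_dist: "distinct (enumL::'e list)" and enumL_set: "set (enumL::'e list) = UNIV"
  using enumL by auto

lemma Fcum_mono: "i \<le> j \<Longrightarrow> Fcum p y i \<le> Fcum p y j"
  unfolding Fcum_def by (rule sum_mono2) (auto simp: pnn)

lemma Fcum_0: "Fcum p y 0 = 0" by (simp add: Fcum_def)

lemma Fcum_n: "Fcum p y (length (enumL::'e list)) = 1"
proof -
  have "Fcum p y (length (enumL::'e list)) = sum_list (map (\<lambda>e. p e y) (enumL::'e list))"
    unfolding Fcum_def by (simp add: sum_list_sum_nth atLeast0LessThan)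
  also have "\<dots> = (\<Sum>e\<in>set (enumL::'e list). p e y)"
    using sum_list_distinct_conv_sum_set[of "enumL::'e list" "\<lambda>e. p e y"] enumL_dist by simp
  also have "\<dots> = 1" using enumL_set psum by simp
  finally show ?thesis .
qed

lemma Iv_disj: "i < j \<Longrightarrow> Iv p y i \<inter> Iv p y j = {}"
  using Fcum_mono[of "Suc i" j y] unfolding Iv_def by auto

lemma Iv_union: "k \<le> length (enumL::'e list) \<Longrightarrow> (\<Union>i<k. Iv p y i) = {0..<Fcum p y k}"
proof (induction k)
  case 0 then show ?case by (simp add: Fcum_0)
next
  case (Suc k)
  have "(\<Union>i<Suc k. Iv p y i) = {0..<Fcum p y k} \<union> Iv p y k"
    using Suc by (simp add: lessThan_Suc Un_commute)
  also have "\<dots> = {0..<Fcum p y (Suc k)}"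
    using Fcum_mono[of 0 k y] Fcum_mono[of k "Suc k" y] unfolding Iv_def Fcum_0 by auto
  finally show ?case .
qed

lemma ch_Iv: "i < length (enumL::'e list) \<Longrightarrow> u \<in> Iv p y i \<Longrightarrow> ch p y u = enumL ! i"
proof -
  assume i: "i < length (enumL::'e list)" and u: "u \<in> Iv p y i"
  have "(LEAST i. i < length (enumL::'e list) \<and> u \<in> Iv p y i) = i"
  proof (rule Least_equality)
    show "i < length (enumL::'e list) \<and> u \<in> Iv p y i" using i u by simp
    fix j assume "j < length (enumL::'e list) \<and> u \<in> Iv p y j"
    then show "i \<le> j" using Iv_disj[of j i y] u by (metis disjoint_iff not_le)
  qed
  then show ?thesis unfolding ch_def using i u by auto
qed

lemma ch_set: "{u. ch p y u = enumL ! i} \<inter> {0..<1} = Iv p y i" if i: "i < length (enumL::'e list)"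
proof -
  have U: "(\<Union>i<length (enumL::'e list). Iv p y i) = {0..<1}"
    using Iv_union[of "length (enumL::'e list)" y] Fcum_n by simp
  show ?thesis
  proof (intro equalityI subsetI)
    fix u assume u: "u \<in> {u. ch p y u = enumL ! i} \<inter> {0..<1}"
    then obtain j where j: "j < length (enumL::'e list)" "u \<in> Iv p y j" using U by blast
    then have "enumL ! j = (enumL ! i :: 'e)" using ch_Iv u by auto
    then have "j = i" using nth_eq_iff_index_eq[of "enumL::'e list" j i] enumL_dist j i by simp
    then show "u \<in> Iv p y i" using j by simp
  next
    fix u assume u: "u \<in> Iv p y i"
    have "ch p y u = enumL ! i" using ch_Iv[OF i u] .
    moreover have "u \<in> {0..<1}" using U i u by blast
    ultimately show "u \<in> {u. ch p y u = enumL ! i} \<inter> {0..<1}" by simp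
  qed
qed

lemma ch_borel: "{u. ch p y u = e} \<in> sets borel"
proof -
  have "{u. ch p y u = e} = (\<Union>i\<in>{i. i < length (enumL::'e list) \<and> enumL ! i = e}. Iv p y i) \<union>
          (if e = enumL ! 0 then - (\<Union>i<length (enumL::'e list). Iv p y i) else {})"
  proof (intro equalityI subsetI)
    fix u assume u: "u \<in> {u. ch p y u = e}"
    show "u \<in> (\<Union>i\<in>{i. i < length (enumL::'e list) \<and> enumL ! i = e}. Iv p y i) \<union>
          (if e = enumL ! 0 then - (\<Union>i<length (enumL::'e list). Iv p y i) else {})"
    proof (cases "\<exists>i<length (enumL::'e list). u \<in> Iv p y i")
      case True
      then obtain i where "i<length (enumL::'e list)" "u \<in> Iv p y i" by blast
      then show ?thesis using ch_Iv u by auto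
    next
      case False
      then show ?thesis using u unfolding ch_def by auto
    qed
  next
    fix u assume "u \<in> (\<Union>i\<in>{i. i < length (enumL::'e list) \<and> enumL ! i = e}. Iv p y i) \<union>
          (if e = enumL ! 0 then - (\<Union>i<length (enumL::'e list). Iv p y i) else {})"
    then show "u \<in> {u. ch p y u = e}"
    proof
      assume "u \<in> (\<Union>i\<in>{i. i < length (enumL::'e list) \<and> enumL ! i = e}. Iv p y i)"
      then show ?thesis using ch_Iv by auto
    next
      assume "u \<in> (if e = enumL ! 0 then - (\<Union>i<length (enumL::'e list). Iv p y i) else {})"
      then have "e = enumL ! 0" "\<not> (\<exists>i<length (enumL::'e list). u \<in> Iv p y i)" by (auto split: if_splits)
      then show ?thesis unfolding ch_def by auto
    qed
  qed
  also have "\<dots> \<in> sets borel"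
  proof (rule sets.Un)
    show "(\<Union>i\<in>{i. i < length (enumL::'e list) \<and> enumL ! i = e}. Iv p y i) \<in> sets borel"
      by (rule sets.finite_UN) (auto simp: Iv_def)
    have "(\<Union>i<length (enumL::'e list). Iv p y i) \<in> sets borel"
      by (rule sets.finite_UN) (auto simp: Iv_def)
    then have "- (\<Union>i<length (enumL::'e list). Iv p y i) \<in> sets borel"
      using borel_comp by blast
    then show "(if e = enumL ! 0 then - (\<Union>i<length (enumL::'e list). Iv p y i) else {}) \<in> sets borel"
      by simp
  qed
  finally show ?thesis .
qed

definition Unif :: "real measure" where "Unif = uniform_measure lborel {0..<1}"

lemma Unif_prob: "prob_space Unif"
  unfolding Unif_def by (rule prob_space_uniform_measure) auto

lemma sets_Unif[simp]: "sets Unif = sets borel" unfolding Unif_def by simp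
lemma space_Unif[simp]: "space Unif = UNIV" unfolding Unif_def by simp

lemma ch_measure: "emeasure Unif {u. ch p y u = e} = ennreal (p e y)"
proof -
  obtain i where i: "i < length (enumL::'e list)" "enumL ! i = e"
    using enumL_set in_set_conv_nth[of e "enumL::'e list"] by auto
  have "emeasure Unif {u. ch p y u = e} = emeasure lborel ({0..<1} \<inter> {u. ch p y u = e})"
    unfolding Unif_def using ch_borel by (simp add: divide_ennreal_def)
  also have "{0..<1} \<inter> {u. ch p y u = e} = Iv p y i" using ch_set[OF i(1)] i(2) by auto
  also have "emeasure lborel (Iv p y i) = ennreal (p e y)"
    unfolding Iv_def using Fcum_mono[of i "Suc i" y] i(2) by (simp add: Fcum_def)
  finally show ?thesis .
qed

end



fun path :: "('e::finite \<Rightarrow> 'a \<Rightarrow> 'a) \<Rightarrow> ('e \<Rightarrow> 'a \<Rightarrow> real) \<Rightarrow> 'a \<Rightarrow> real stream \<Rightarrow> nat \<Rightarrow> 'e" where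
  "path w p y U 0 = ch p y (shd U)"
| "path w p y U (Suc k) = path w p (w (ch p y (shd U)) y) (stl U) k"

definition sig :: "('e::finite \<Rightarrow> 'a \<Rightarrow> 'a) \<Rightarrow> ('e \<Rightarrow> 'a \<Rightarrow> real) \<Rightarrow> int \<Rightarrow> 'a \<Rightarrow> real stream \<Rightarrow> int \<Rightarrow> 'e" where
  "sig w p m x U j = (if m \<le> j then path w p x U (nat (j - m)) else undefined)"

context probs begin

lemma pweight_nn: "0 \<le> pweight w p es y"
  by (induction es arbitrary: y) (auto simp: pnn)

abbreviation "SU \<equiv> stream_space Unif"

lemma SU_prob: "prob_space SU"
  using Unif_prob prob_space.prob_space_stream_space by blast

lemma space_SU[simp]: "space SU = UNIV" by (simp add: space_stream_space)

lemma path_cyl: "{U. \<forall>k<length es. path w p y U k = es!k} \<in> sets SU \<and>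
   emeasure SU {U. \<forall>k<length es. path w p y U k = es!k} = ennreal (pweight w p es y)"
proof (induction es arbitrary: y)
  case Nil
  interpret P: prob_space SU by (rule SU_prob)
  have "{U. \<forall>k<length []. path w p y U k = ([]::'e list)!k} = space SU" by simp
  then show ?case using P.emeasure_space_1 sets.top[of SU] by simp
next
  case (Cons e es)
  define B where "B = {U. \<forall>k<length es. path w p (w e y) U k = es!k}"
  have B: "B \<in> sets SU" "emeasure SU B = ennreal (pweight w p es (w e y))" using Cons.IH B_def by auto
  have eq: "{U. \<forall>k<length (e#es). path w p y U k = (e#es)!k} = {U. ch p y (shd U) = e \<and> stl U \<in> B}"
  proof (intro equalityI subsetI)
    fix U assume "U \<in> {U. \<forall>k<length (e#es). path w p y U k = (e#es)!k}"
    then have H: "\<And>k. k < Suc (length es) \<Longrightarrow> path w p y U k = (e#es)!k" by auto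
    have 0: "ch p y (shd U) = e" using H[of 0] by simp
    have "\<forall>k<length es. path w p (w e y) (stl U) k = es!k"
    proof (intro allI impI)
      fix k assume "k < length es"
      then have "path w p y U (Suc k) = (e#es) ! Suc k" using H[of "Suc k"] by simp
      then show "path w p (w e y) (stl U) k = es!k" using 0 by simp
    qed
    then show "U \<in> {U. ch p y (shd U) = e \<and> stl U \<in> B}" using 0 B_def by simp
  next
    fix U assume U: "U \<in> {U. ch p y (shd U) = e \<and> stl U \<in> B}"
    show "U \<in> {U. \<forall>k<length (e#es). path w p y U k = (e#es)!k}"
    proof (simp, intro allI impI)
      fix k assume k: "k < Suc (length es)"
      show "path w p y U k = (e#es)!k"
      proof (cases k)
        case 0 then show ?thesis using U by simp
      next
        case (Suc j) then show ?thesis using U k B_def by simp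
      qed
    qed
  qed
  have chm[measurable]: "Measurable.pred Unif (\<lambda>u. ch p y u = e)"
    unfolding pred_def using ch_borel by simp
  have Bm[measurable]: "B \<in> sets SU" by (rule B(1))
  have X: "{U. ch p y (shd U) = e \<and> stl U \<in> B} \<in> sets SU"
  proof -
    have "Measurable.pred SU (\<lambda>U. ch p y (shd U) = e \<and> stl U \<in> B)" by measurable
    then show ?thesis unfolding pred_def by simp
  qed
  interpret U: prob_space Unif by (rule Unif_prob)
  have "emeasure SU {U. ch p y (shd U) = e \<and> stl U \<in> B} =
      (\<integral>\<^sup>+t. emeasure SU {x\<in>space SU. t ## x \<in> {U. ch p y (shd U) = e \<and> stl U \<in> B}} \<partial>Unif)"
    by (rule U.emeasure_stream_space[OF X])
  also have "\<dots> = (\<integral>\<^sup>+t. emeasure SU B * indicator {u. ch p y u = e} t \<partial>Unif)"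
    by (intro nn_integral_cong) (auto split: split_indicator)
  also have "\<dots> = emeasure SU B * emeasure Unif {u. ch p y u = e}"
    using ch_borel by (intro nn_integral_cmult_indicator) simp
  also have "\<dots> = ennreal (pweight w p (e#es) y)"
    using B(2) ch_measure by (simp add: ennreal_mult'' pweight_nn pnn mult.commute)
  finally show ?case using eq X by simp
qed

lemma Pm_exists: "\<exists>\<mu>. prob_space \<mu> \<and> space \<mu> = UNIV \<and> sets \<mu> = Asig m \<and>
       (\<forall>es. es \<noteq> [] \<longrightarrow> measure \<mu> (cyl m es) = pweight w p es x)"
proof -
  define G where "G = {cyl m es | es::'e list. es \<noteq> []}"
  have GP: "G \<subseteq> Pow UNIV" by simp
  have pre: "sig w p m x -` cyl m es \<inter> space SU = {U. \<forall>k<length es. path w p x U k = es!k}" for es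
    unfolding cyl_def sig_def by auto
  have meas: "sig w p m x \<in> measurable SU (sigma UNIV G)"
  proof (rule measurable_measure_of[OF GP])
    show "sig w p m x \<in> space SU \<rightarrow> UNIV" by simp
    fix A assume "A \<in> G"
    then obtain es where "A = cyl m es" unfolding G_def by blast
    then show "sig w p m x -` A \<inter> space SU \<in> sets SU" using pre path_cyl by simp
  qed
  define \<mu> where "\<mu> = distr SU (sigma UNIV G) (sig w p m x)"
  interpret P: prob_space SU by (rule SU_prob)
  have "prob_space \<mu>" unfolding \<mu>_def by (rule P.prob_space_distr[OF meas])
  moreover have "space \<mu> = UNIV" unfolding \<mu>_def using space_measure_of[OF GP] by simp
  moreover have "sets \<mu> = Asig m" unfolding \<mu>_def Asig_def G_def using sets_measure_of[OF GP[unfolded G_def]] by simp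
  moreover have "measure \<mu> (cyl m es) = pweight w p es x" if ne: "es \<noteq> []" for es
  proof -
    have cs: "cyl m es \<in> sets (sigma UNIV G)"
      using sets_measure_of[OF GP] ne unfolding G_def by auto
    have "measure \<mu> (cyl m es) = measure SU (sig w p m x -` cyl m es \<inter> space SU)"
      unfolding \<mu>_def by (rule measure_distr[OF meas cs])
    also have "\<dots> = pweight w p es x" using pre path_cyl[of es w x] pweight_nn
      by (simp add: measure_def)
    finally show ?thesis .
  qed
  ultimately show ?thesis by blast
qed

lemma Pm_props: "prob_space (Pm w p m x) \<and> space (Pm w p m x) = UNIV \<and> sets (Pm w p m x) = Asig m \<and>
       (\<forall>es. es \<noteq> [] \<longrightarrow> measure (Pm w p m x) (cyl m es) = pweight w p es x)"
  unfolding Pm_def by (rule someI_ex) (rule Pm_exists)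

end



definition words :: "nat \<Rightarrow> ('e::finite) list set" where "words k = {es. length es = k}"

definition EE :: "('e::finite \<Rightarrow> 'a \<Rightarrow> 'a) \<Rightarrow> ('e \<Rightarrow> 'a \<Rightarrow> real) \<Rightarrow> nat \<Rightarrow> 'a \<Rightarrow> ('e list \<Rightarrow> real) \<Rightarrow> real" where
  "EE w p k x f = (\<Sum>es\<in>words k. pweight w p es x * f es)"

definition wl :: "('e \<Rightarrow> 'a \<Rightarrow> 'a) \<Rightarrow> 'e list \<Rightarrow> 'a \<Rightarrow> 'a" where
  "wl w vs z = foldl (\<lambda>z e. w e z) z vs"

lemma wl_Nil[simp]: "wl w [] z = z" and wl_Cons[simp]: "wl w (e#vs) z = wl w vs (w e z)"
  and wl_append[simp]: "wl w (us @ vs) z = wl w vs (wl w us z)"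
  by (simp_all add: wl_def)

lemma words_0: "words 0 = {[]}" by (auto simp: words_def)

lemma words_Suc: "words (Suc k) = (\<lambda>(e,vs). e#vs) ` (UNIV \<times> words k)"
proof (intro equalityI subsetI)
  fix es assume "es \<in> words (Suc k)"
  then obtain e vs where "es = e#vs" "length vs = k" by (auto simp: words_def length_Suc_conv)
  then show "es \<in> (\<lambda>(e,vs). e#vs) ` (UNIV \<times> words k)" by (force simp: words_def)
qed (auto simp: words_def)

lemma finite_words: "finite (words k :: ('e::finite) list set)"
  by (induction k) (auto simp: words_0 words_Suc)

lemma EE_Suc: "EE w p (Suc k) x f = (\<Sum>e\<in>UNIV. p e x * EE w p k (w e x) (\<lambda>vs. f (e#vs)))"
proof -
  have inj: "inj_on (\<lambda>(e,vs). e#vs) (UNIV \<times> words k)" by (auto simp: inj_on_def)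
  have "EE w p (Suc k) x f = (\<Sum>(e,vs)\<in>UNIV \<times> words k. pweight w p (e#vs) x * f (e#vs))"
    unfolding EE_def words_Suc by (subst sum.reindex[OF inj]) (simp add: case_prod_beta)
  also have "\<dots> = (\<Sum>e\<in>UNIV. \<Sum>vs\<in>words k. pweight w p (e#vs) x * f (e#vs))"
    by (rule sum.cartesian_product[symmetric])
  also have "\<dots> = (\<Sum>e\<in>UNIV. p e x * EE w p k (w e x) (\<lambda>vs. f (e#vs)))"
    unfolding EE_def by (simp add: sum_distrib_left mult.assoc)
  finally show ?thesis .
qed

lemma EE_0: "EE w p 0 x f = f []" by (simp add: EE_def words_0)

lemma EE_append: "EE w p (g + k) x f = EE w p g x (\<lambda>us. EE w p k (wl w us x) (\<lambda>vs. f (us @ vs)))"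
proof (induction g arbitrary: x f)
  case 0 then show ?case by (simp add: EE_0)
next
  case (Suc g)
  have "EE w p (Suc g + k) x f = (\<Sum>e\<in>UNIV. p e x * EE w p (g + k) (w e x) (\<lambda>vs. f (e#vs)))"
    using EE_Suc[of w p "g+k"] by simp
  also have "\<dots> = (\<Sum>e\<in>UNIV. p e x * EE w p g (w e x) (\<lambda>us. EE w p k (wl w us (w e x)) (\<lambda>vs. f (e # us @ vs))))"
    using Suc.IH by simp
  also have "\<dots> = EE w p (Suc g) x (\<lambda>us. EE w p k (wl w us x) (\<lambda>vs. f (us @ vs)))"
    by (simp add: EE_Suc)
  finally show ?case .
qed

lemma EE_add: "EE w p k x (\<lambda>es. f es + h es) = EE w p k x f + EE w p k x h"
  unfolding EE_def by (simp add: distrib_left sum.distrib)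

lemma EE_cmult: "EE w p k x (\<lambda>es. c * f es) = c * EE w p k x f"
  unfolding EE_def by (simp add: sum_distrib_left mult.left_commute)

context probs begin

lemma EE_mono:
  assumes H: "\<And>es. length es = k \<Longrightarrow> pweight w p es x \<noteq> 0 \<Longrightarrow> f es \<le> h es"
  shows "EE w p k x f \<le> EE w p k x h"
  unfolding EE_def
proof (rule sum_mono)
  fix es :: "'e list" assume es: "es \<in> words k"
  show "pweight w p es x * f es \<le> pweight w p es x * h es"
  proof (cases "pweight w p es x = 0")
    case False then show ?thesis using H[of es] es pweight_nn[of w es x]
      by (intro mult_left_mono) (auto simp: words_def)
  qed simp
qed

lemma EE_nn: "(\<And>es. 0 \<le> f es) \<Longrightarrow> 0 \<le> EE w p k x f"
  unfolding EE_def by (intro sum_nonneg mult_nonneg_nonneg pweight_nn) auto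

lemma EE_one: "EE w p k x (\<lambda>_. 1) = 1"
proof (induction k arbitrary: x)
  case 0 then show ?case by (simp add: EE_0)
next
  case (Suc k) then show ?case by (simp add: EE_Suc psum)
qed

lemma p_le1: "p e y \<le> 1"
proof -
  have "p e y \<le> (\<Sum>e\<in>UNIV. p e y)" by (rule member_le_sum) (auto simp: pnn)
  then show ?thesis using psum by simp
qed

end

locale cmsl =
  fixes N :: nat and ii tt :: "'e::finite \<Rightarrow> nat" and Kp :: "nat \<Rightarrow> 'a::complete_space set"
    and w :: "'e \<Rightarrow> 'a \<Rightarrow> 'a" and p :: "'e \<Rightarrow> 'a \<Rightarrow> real" and a :: real
  assumes cms: "cms N ii tt Kp w p a"
begin

lemma a_pos: "0 < a" and a_lt1: "a < 1" using cms unfolding cms_def by auto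
lemma ii_in: "ii e \<in> {1..N}" and tt_in: "tt e \<in> {1..N}" using cms unfolding cms_def by auto
lemma Kp_disj: "j \<in> {1..N} \<Longrightarrow> k \<in> {1..N} \<Longrightarrow> j \<noteq> k \<Longrightarrow> Kp j \<inter> Kp k = {}"
  using cms unfolding cms_def by auto
lemma Kp_borel: "j \<in> {1..N} \<Longrightarrow> Kp j \<in> sets borel" using cms unfolding cms_def by auto
lemma Kp_cover: "\<exists>j\<in>{1..N}. y \<in> Kp j"
proof -
  have "(\<Union>j\<in>{1..N}. Kp j) = UNIV" using cms unfolding cms_def by auto
  then show ?thesis by blast
qed
lemma w_in: "y \<in> Kp (ii e) \<Longrightarrow> w e y \<in> Kp (tt e)" using cms unfolding cms_def by blast
lemma p_out: "y \<notin> Kp (ii e) \<Longrightarrow> p e y = 0" using cms unfolding cms_def by auto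
lemma p_nn: "0 \<le> p e y" using cms unfolding cms_def by auto
lemma p_sum: "(\<Sum>e\<in>UNIV. p e y) = 1" using cms unfolding cms_def by auto
lemma contr: "j \<in> {1..N} \<Longrightarrow> x \<in> Kp j \<Longrightarrow> y \<in> Kp j \<Longrightarrow> (\<Sum>e\<in>UNIV. p e x * dist (w e x) (w e y)) \<le> a * dist x y"
  using cms unfolding cms_def by auto
lemma w_meas: "w e \<in> borel_measurable borel" and p_meas: "p e \<in> borel_measurable borel"
  using cms unfolding cms_def by auto

sublocale probs p by unfold_locales (auto simp: p_nn p_sum)

lemma vert_eq: "j \<in> {1..N} \<Longrightarrow> y \<in> Kp j \<Longrightarrow> p e y \<noteq> 0 \<Longrightarrow> ii e = j"
  using p_out[of y e] Kp_disj[of j "ii e"] ii_in[of e] by blast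

lemma contrK: "j \<in> {1..N} \<Longrightarrow> z \<in> Kp j \<Longrightarrow> u \<in> Kp j \<Longrightarrow>
   EE w p k z (\<lambda>vs. dist (wl w vs z) (wl w vs u)) \<le> a^k * dist z u"
proof (induction k arbitrary: j z u)
  case 0 then show ?case by (simp add: EE_0)
next
  case (Suc k)
  have "EE w p (Suc k) z (\<lambda>vs. dist (wl w vs z) (wl w vs u))
      = (\<Sum>e\<in>UNIV. p e z * EE w p k (w e z) (\<lambda>vs. dist (wl w vs (w e z)) (wl w vs (w e u))))"
    by (simp add: EE_Suc)
  also have "\<dots> \<le> (\<Sum>e\<in>UNIV. p e z * (a^k * dist (w e z) (w e u)))"
  proof (rule sum_mono)
    fix e
    show "p e z * EE w p k (w e z) (\<lambda>vs. dist (wl w vs (w e z)) (wl w vs (w e u))) \<le> p e z * (a^k * dist (w e z) (w e u))"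
    proof (cases "p e z = 0")
      case False
      then have "ii e = j" using vert_eq Suc.prems by blast
      then have "w e z \<in> Kp (tt e)" "w e u \<in> Kp (tt e)" using w_in Suc.prems by auto
      then show ?thesis using Suc.IH[OF tt_in] p_nn by (intro mult_left_mono) auto
    qed simp
  qed
  also have "\<dots> = a^k * (\<Sum>e\<in>UNIV. p e z * dist (w e z) (w e u))"
    by (simp add: sum_distrib_left mult.left_commute)
  also have "\<dots> \<le> a^k * (a * dist z u)"
    using contr[OF Suc.prems] a_pos by (intro mult_left_mono) auto
  finally show ?case by (simp add: algebra_simps)
qed

end



definition Dist :: "(nat \<Rightarrow> 'a::metric_space set) \<Rightarrow> nat \<Rightarrow> (nat \<Rightarrow> 'a) \<Rightarrow> 'a \<Rightarrow> real" where
  "Dist Kp N zs y = (\<Sum>j\<in>{1..N}. indicator (Kp j) y * dist y (zs j))"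

definition cst :: "('e::finite \<Rightarrow> 'a::metric_space \<Rightarrow> 'a) \<Rightarrow> ('e \<Rightarrow> nat) \<Rightarrow> ('e \<Rightarrow> nat) \<Rightarrow> (nat \<Rightarrow> 'a) \<Rightarrow> real" where
  "cst w ii tt zs = (\<Sum>e\<in>UNIV. dist (w e (zs (ii e))) (zs (tt e)))"

definition Yw :: "('e \<Rightarrow> nat) \<Rightarrow> ('e \<Rightarrow> 'a \<Rightarrow> 'a) \<Rightarrow> (nat \<Rightarrow> 'a) \<Rightarrow> 'e list \<Rightarrow> 'a" where
  "Yw ii w zs vv = wl w vv (zs (ii (hd vv)))"

definition Dw :: "('e \<Rightarrow> nat) \<Rightarrow> ('e \<Rightarrow> 'a::metric_space \<Rightarrow> 'a) \<Rightarrow> (nat \<Rightarrow> 'a) \<Rightarrow> (nat \<Rightarrow> 'a) \<Rightarrow> 'e list \<Rightarrow> real" where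
  "Dw ii w xs ys vv = dist (Yw ii w xs vv) (Yw ii w xs (tl vv)) + dist (Yw ii w ys vv) (Yw ii w ys (tl vv))
      + dist (Yw ii w xs (tl vv)) (Yw ii w ys (tl vv))"

lemma Dw_nn: "0 \<le> Dw ii w xs ys vv" unfolding Dw_def by simp

lemma cst_nn: "0 \<le> cst w ii tt zs" unfolding cst_def by (simp add: sum_nonneg)

lemma Dist_nn: "0 \<le> Dist Kp N zs y" unfolding Dist_def by (simp add: sum_nonneg)

lemma EE_const: "probs p \<Longrightarrow> EE w p k x (\<lambda>_. c) = c"
  using probs.EE_one[of p w k x] EE_cmult[of w p k x c "\<lambda>_. 1"] by simp

context cmsl begin

lemma Dist_eq: assumes j: "j \<in> {1..N}" "y \<in> Kp j" shows "Dist Kp N zs y = dist y (zs j)"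
proof -
  have "Dist Kp N zs y = (\<Sum>i\<in>{1..N}. if i = j then dist y (zs j) else 0)"
    unfolding Dist_def
  proof (rule sum.cong)
    fix i assume i: "i \<in> {1..N}"
    show "indicator (Kp i) y * dist y (zs i) = (if i = j then dist y (zs j) else 0)"
    proof (cases "i = j")
      case False
      then have "y \<notin> Kp i" using Kp_disj[OF i j(1)] j(2) by blast
      then show ?thesis using False by simp
    qed (use j in simp)
  qed simp
  then show ?thesis using j(1) by simp
qed

lemma drift1:
  assumes zs: "\<forall>i\<in>{1..N}. zs i \<in> Kp i"
  shows "(\<Sum>e\<in>UNIV. p e y * Dist Kp N zs (w e y)) \<le> a * Dist Kp N zs y + cst w ii tt zs"
proof -
  obtain j where j: "j \<in> {1..N}" "y \<in> Kp j" using Kp_cover by blast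
  have T: "p e y * Dist Kp N zs (w e y) \<le> p e y * dist (w e y) (w e (zs j)) + dist (w e (zs (ii e))) (zs (tt e))" for e
  proof (cases "p e y = 0")
    case False
    then have ie: "ii e = j" using vert_eq j by blast
    have "w e y \<in> Kp (tt e)" using w_in j ie by auto
    then have D: "Dist Kp N zs (w e y) = dist (w e y) (zs (tt e))" using Dist_eq tt_in by blast
    have "dist (w e y) (zs (tt e)) \<le> dist (w e y) (w e (zs j)) + dist (w e (zs j)) (zs (tt e))"
      by (rule dist_triangle)
    then have "p e y * Dist Kp N zs (w e y) \<le> p e y * dist (w e y) (w e (zs j)) + p e y * dist (w e (zs (ii e))) (zs (tt e))"
      using D ie p_nn[of e y] by (simp add: distrib_left[symmetric] mult_left_mono)
    also have "p e y * dist (w e (zs (ii e))) (zs (tt e)) \<le> dist (w e (zs (ii e))) (zs (tt e))"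
      using p_le1[of e y] p_nn[of e y] by (simp add: mult_left_le_one_le)
    finally show ?thesis by simp
  qed simp
  have "(\<Sum>e\<in>UNIV. p e y * Dist Kp N zs (w e y)) \<le> (\<Sum>e\<in>UNIV. p e y * dist (w e y) (w e (zs j)) + dist (w e (zs (ii e))) (zs (tt e)))"
    by (rule sum_mono) (rule T)
  also have "\<dots> = (\<Sum>e\<in>UNIV. p e y * dist (w e y) (w e (zs j))) + cst w ii tt zs"
    unfolding cst_def by (simp add: sum.distrib)
  also have "\<dots> \<le> a * dist y (zs j) + cst w ii tt zs"
    using contr[OF j(1) j(2)] zs j(1) by auto
  also have "dist y (zs j) = Dist Kp N zs y" using Dist_eq[OF j] by simp
  finally show ?thesis .
qed

lemma driftK:
  assumes zs: "\<forall>i\<in>{1..N}. zs i \<in> Kp i"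
  shows "EE w p g x (\<lambda>us. Dist Kp N zs (wl w us x)) \<le> a^g * Dist Kp N zs x + cst w ii tt zs * (\<Sum>i<g. a^i)"
proof (induction g arbitrary: x)
  case 0 then show ?case by (simp add: EE_0)
next
  case (Suc g)
  let ?D = "Dist Kp N zs" and ?c = "cst w ii tt zs" and ?S = "(\<Sum>i<g. a^i)"
  have "EE w p (Suc g) x (\<lambda>us. ?D (wl w us x)) = (\<Sum>e\<in>UNIV. p e x * EE w p g (w e x) (\<lambda>vs. ?D (wl w vs (w e x))))"
    by (simp add: EE_Suc)
  also have "\<dots> \<le> (\<Sum>e\<in>UNIV. p e x * (a^g * ?D (w e x) + ?c * ?S))"
    by (intro sum_mono mult_left_mono Suc.IH p_nn)
  also have "\<dots> = a^g * (\<Sum>e\<in>UNIV. p e x * ?D (w e x)) + ?c * ?S * (\<Sum>e\<in>UNIV. p e x)"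
    by (simp add: sum.distrib sum_distrib_left algebra_simps)
  also have "\<dots> = a^g * (\<Sum>e\<in>UNIV. p e x * ?D (w e x)) + ?c * ?S" by (simp add: p_sum)
  also have "\<dots> \<le> a^g * (a * ?D x + ?c) + ?c * ?S"
    using drift1[OF zs, of x] a_pos by (intro add_right_mono mult_left_mono) auto
  also have "\<dots> = a^(Suc g) * ?D x + ?c * (\<Sum>i<Suc g. a^i)"
    by (simp add: algebra_simps)
  finally show ?case .
qed

lemma La:
  assumes zs: "\<forall>i\<in>{1..N}. zs i \<in> Kp i"
  shows "(\<Sum>e\<in>UNIV. p e z * dist (w e z) (w e (zs (ii e)))) \<le> Dist Kp N zs z"
proof -
  obtain j where j: "j \<in> {1..N}" "z \<in> Kp j" using Kp_cover by blast
  have "(\<Sum>e\<in>UNIV. p e z * dist (w e z) (w e (zs (ii e)))) = (\<Sum>e\<in>UNIV. p e z * dist (w e z) (w e (zs j)))"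
  proof (rule sum.cong)
    fix e show "p e z * dist (w e z) (w e (zs (ii e))) = p e z * dist (w e z) (w e (zs j))"
      using vert_eq[OF j] by (cases "p e z = 0") auto
  qed simp
  also have "\<dots> \<le> a * dist z (zs j)" using contr[OF j] zs j(1) by auto
  also have "\<dots> \<le> dist z (zs j)" using a_lt1 by (simp add: mult_left_le_one_le a_pos less_imp_le)
  finally show ?thesis using Dist_eq[OF j] by simp
qed

lemma Lb:
  assumes zs: "\<forall>i\<in>{1..N}. zs i \<in> Kp i"
  shows "(\<Sum>e\<in>UNIV. p e z * dist (w e z) (zs (tt e))) \<le> Dist Kp N zs z + cst w ii tt zs"
proof -
  obtain j where j: "j \<in> {1..N}" "z \<in> Kp j" using Kp_cover by blast
  have "(\<Sum>e\<in>UNIV. p e z * dist (w e z) (zs (tt e))) = (\<Sum>e\<in>UNIV. p e z * Dist Kp N zs (w e z))"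
  proof (rule sum.cong)
    fix e show "p e z * dist (w e z) (zs (tt e)) = p e z * Dist Kp N zs (w e z)"
    proof (cases "p e z = 0")
      case False
      then have "w e z \<in> Kp (tt e)" using vert_eq[OF j] w_in j by auto
      then show ?thesis using Dist_eq[OF tt_in] by simp
    qed simp
  qed simp
  also have "\<dots> \<le> a * Dist Kp N zs z + cst w ii tt zs" by (rule drift1[OF zs])
  also have "\<dots> \<le> Dist Kp N zs z + cst w ii tt zs"
    using a_lt1 Dist_nn[of Kp N zs z] by (simp add: mult_left_le_one_le a_pos less_imp_le)
  finally show ?thesis .
qed

end



context cmsl begin

lemma pweight_Cons_ne: "pweight w p (v#vs) y \<noteq> 0 \<Longrightarrow> p v y \<noteq> 0" by auto

lemma Lc:
  assumes xs: "\<forall>i\<in>{1..N}. xs i \<in> Kp i" and ys: "\<forall>i\<in>{1..N}. ys i \<in> Kp i" and pe: "p e z \<noteq> 0"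
  shows "EE w p (Suc n) (w e z) (\<lambda>vs. Dw ii w xs ys (e#vs)) \<le>
     a^(Suc n) * (dist (w e z) (w e (xs (ii e))) + dist (w e z) (w e (ys (ii e)))
        + 2 * dist (w e z) (xs (tt e)) + 2 * dist (w e z) (ys (tt e)))"
proof -
  define t where "t = tt e"
  define z' where "z' = w e z"
  define u1 where "u1 = w e (xs (ii e))"
  define u2 where "u2 = w e (ys (ii e))"
  have t: "t \<in> {1..N}" unfolding t_def by (rule tt_in)
  have zi: "z \<in> Kp (ii e)" using p_out pe by blast
  have z': "z' \<in> Kp t" unfolding z'_def t_def using w_in zi by blast
  have u1: "u1 \<in> Kp t" unfolding u1_def t_def using w_in xs ii_in by blast
  have u2: "u2 \<in> Kp t" unfolding u2_def t_def using w_in ys ii_in by blast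
  have xt: "xs t \<in> Kp t" and yt: "ys t \<in> Kp t" using xs ys t by auto
  let ?W = "\<lambda>vs u. wl w vs u"
  let ?G = "\<lambda>vs. dist (?W vs z') (?W vs u1) + dist (?W vs z') (?W vs u2)
      + dist (?W vs z') (?W vs (xs t)) + dist (?W vs z') (?W vs (xs t))
      + dist (?W vs z') (?W vs (ys t)) + dist (?W vs z') (?W vs (ys t))"
  have "EE w p (Suc n) z' (\<lambda>vs. Dw ii w xs ys (e#vs)) \<le> EE w p (Suc n) z' ?G"
  proof (rule EE_mono)
    fix vs :: "'e list" assume len: "length vs = Suc n" and pw: "pweight w p vs z' \<noteq> 0"
    then obtain v vs' where vs: "vs = v # vs'" by (cases vs) auto
    then have "p v z' \<noteq> 0" using pw by auto
    then have iv: "ii v = t" using vert_eq[OF t z'] by blast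
    have Y1: "Yw ii w xs (e#vs) = ?W vs u1" "Yw ii w ys (e#vs) = ?W vs u2"
      unfolding Yw_def u1_def u2_def by simp_all
    have Y2: "Yw ii w xs vs = ?W vs (xs t)" "Yw ii w ys vs = ?W vs (ys t)"
      unfolding Yw_def using vs iv by simp_all
    have "Dw ii w xs ys (e#vs) = dist (?W vs u1) (?W vs (xs t)) + dist (?W vs u2) (?W vs (ys t))
        + dist (?W vs (xs t)) (?W vs (ys t))"
      unfolding Dw_def using Y1 Y2 by simp
    also have "\<dots> \<le> ?G vs"
      using dist_triangle3[of "?W vs u1" "?W vs (xs t)" "?W vs z'"]
        dist_triangle3[of "?W vs u2" "?W vs (ys t)" "?W vs z'"]
        dist_triangle3[of "?W vs (xs t)" "?W vs (ys t)" "?W vs z'"] by linarith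
    finally show "Dw ii w xs ys (e#vs) \<le> ?G vs" .
  qed
  also have "EE w p (Suc n) z' ?G \<le> a^(Suc n) * dist z' u1 + a^(Suc n) * dist z' u2
      + a^(Suc n) * dist z' (xs t) + a^(Suc n) * dist z' (xs t)
      + a^(Suc n) * dist z' (ys t) + a^(Suc n) * dist z' (ys t)"
    unfolding EE_add
    using contrK[OF t z' u1, of "Suc n"] contrK[OF t z' u2, of "Suc n"]
      contrK[OF t z' xt, of "Suc n"] contrK[OF t z' yt, of "Suc n"]
    by linarith
  also have "\<dots> = a^(Suc n) * (dist z' u1 + dist z' u2 + 2 * dist z' (xs t) + 2 * dist z' (ys t))"
    by (simp add: algebra_simps)
  finally show ?thesis unfolding z'_def u1_def u2_def t_def .
qed

lemma Dw_bound:
  assumes xs: "\<forall>i\<in>{1..N}. xs i \<in> Kp i" and ys: "\<forall>i\<in>{1..N}. ys i \<in> Kp i"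
  shows "EE w p (Suc (Suc n)) z (Dw ii w xs ys) \<le>
     3 * a^(Suc n) * (Dist Kp N xs z + Dist Kp N ys z + cst w ii tt xs + cst w ii tt ys)"
proof -
  let ?A = "\<lambda>e. dist (w e z) (w e (xs (ii e)))" and ?B = "\<lambda>e. dist (w e z) (w e (ys (ii e)))"
  let ?C = "\<lambda>e. dist (w e z) (xs (tt e))" and ?D = "\<lambda>e. dist (w e z) (ys (tt e))"
  have "EE w p (Suc (Suc n)) z (Dw ii w xs ys) = (\<Sum>e\<in>UNIV. p e z * EE w p (Suc n) (w e z) (\<lambda>vs. Dw ii w xs ys (e#vs)))"
    by (rule EE_Suc)
  also have "\<dots> \<le> (\<Sum>e\<in>UNIV. p e z * (a^(Suc n) * (?A e + ?B e + 2 * ?C e + 2 * ?D e)))"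
  proof (rule sum_mono)
    fix e show "p e z * EE w p (Suc n) (w e z) (\<lambda>vs. Dw ii w xs ys (e#vs)) \<le> p e z * (a^(Suc n) * (?A e + ?B e + 2 * ?C e + 2 * ?D e))"
      using Lc[OF xs ys, of e z n] p_nn[of e z] by (cases "p e z = 0") (auto intro: mult_left_mono)
  qed
  also have "\<dots> = a^(Suc n) * ((\<Sum>e\<in>UNIV. p e z * ?A e) + (\<Sum>e\<in>UNIV. p e z * ?B e) + 2 * (\<Sum>e\<in>UNIV. p e z * ?C e) + 2 * (\<Sum>e\<in>UNIV. p e z * ?D e))"
    by (simp add: sum.distrib sum_distrib_left algebra_simps)
  also have "\<dots> \<le> a^(Suc n) * (Dist Kp N xs z + Dist Kp N ys z + 2 * (Dist Kp N xs z + cst w ii tt xs) + 2 * (Dist Kp N ys z + cst w ii tt ys))"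
    using La[OF xs, of z] La[OF ys, of z] Lb[OF xs, of z] Lb[OF ys, of z] a_pos
    by (intro mult_left_mono) auto
  also have "\<dots> \<le> 3 * a^(Suc n) * (Dist Kp N xs z + Dist Kp N ys z + cst w ii tt xs + cst w ii tt ys)"
    using a_pos Dist_nn[of Kp N xs z] Dist_nn[of Kp N ys z] cst_nn[of w ii tt xs] cst_nn[of w ii tt ys]
    by (simp add: algebra_simps)
  finally show ?thesis .
qed

lemma level_bound:
  assumes xs: "\<forall>i\<in>{1..N}. xs i \<in> Kp i" and ys: "\<forall>i\<in>{1..N}. ys i \<in> Kp i"
  shows "EE w p (g + Suc (Suc n)) x (\<lambda>es. Dw ii w xs ys (drop g es)) \<le>
     3 * a^(Suc n) * (a^g * (Dist Kp N xs x + Dist Kp N ys x) + (cst w ii tt xs + cst w ii tt ys) * (1/(1-a) + 1))"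
proof -
  let ?Dx = "Dist Kp N xs" and ?Dy = "Dist Kp N ys" and ?c = "cst w ii tt xs + cst w ii tt ys"
  let ?S = "(\<Sum>i<g. a^i)"
  have S: "?S \<le> 1/(1-a)"
  proof -
    have "?S = (1 - a^g)/(1-a)" using a_lt1 by (simp add: sum_gp_strict)
    also have "\<dots> \<le> 1/(1-a)" using a_lt1 a_pos by (simp add: divide_right_mono)
    finally show ?thesis .
  qed
  have "EE w p (g + Suc (Suc n)) x (\<lambda>es. Dw ii w xs ys (drop g es))
     = EE w p g x (\<lambda>us. EE w p (Suc (Suc n)) (wl w us x) (\<lambda>vs. Dw ii w xs ys (drop g (us @ vs))))"
    by (rule EE_append)
  also have "\<dots> \<le> EE w p g x (\<lambda>us. 3 * a^(Suc n) * (?Dx (wl w us x) + ?Dy (wl w us x) + ?c))"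
  proof (rule EE_mono)
    fix us :: "'e list" assume "length us = g"
    then show "EE w p (Suc (Suc n)) (wl w us x) (\<lambda>vs. Dw ii w xs ys (drop g (us @ vs))) \<le>
        3 * a^(Suc n) * (?Dx (wl w us x) + ?Dy (wl w us x) + ?c)"
      using Dw_bound[OF xs ys, of n "wl w us x"] by (simp add: add.assoc)
  qed
  also have "\<dots> = 3 * a^(Suc n) * (EE w p g x (\<lambda>us. ?Dx (wl w us x)) + EE w p g x (\<lambda>us. ?Dy (wl w us x)) + ?c)"
    by (simp add: EE_cmult EE_add EE_const probs_axioms)
  also have "\<dots> \<le> 3 * a^(Suc n) * ((a^g * ?Dx x + cst w ii tt xs * ?S) + (a^g * ?Dy x + cst w ii tt ys * ?S) + ?c)"
    using driftK[OF xs, of g x] driftK[OF ys, of g x] a_pos by (intro mult_left_mono) auto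
  also have "\<dots> \<le> 3 * a^(Suc n) * (a^g * (?Dx x + ?Dy x) + ?c * (1/(1-a) + 1))"
  proof -
    have "cst w ii tt xs * ?S + cst w ii tt ys * ?S \<le> ?c * (1/(1-a))"
    proof -
      have 1: "cst w ii tt xs * ?S \<le> cst w ii tt xs * (1/(1-a))" by (rule mult_left_mono[OF S cst_nn])
      have 2: "cst w ii tt ys * ?S \<le> cst w ii tt ys * (1/(1-a))" by (rule mult_left_mono[OF S cst_nn])
      have 3: "?c * (1/(1-a)) = cst w ii tt xs * (1/(1-a)) + cst w ii tt ys * (1/(1-a))" by (simp add: add_divide_distrib)
      show ?thesis using 1 2 3 by linarith
    qed
    then show ?thesis using a_pos by (intro mult_left_mono) (auto simp: algebra_simps)
  qed
  finally show ?thesis .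
qed

end



definition wsig :: "(int \<Rightarrow> 'e) \<Rightarrow> nat \<Rightarrow> 'e list" where
  "wsig \<sigma> n = map (\<lambda>k. \<sigma> (int k - int n)) [0..<Suc n]"

lemma length_wsig[simp]: "length (wsig \<sigma> n) = Suc n" by (simp add: wsig_def)

lemma nth_wsig: "k < Suc n \<Longrightarrow> wsig \<sigma> n ! k = \<sigma> (int k - int n)"
  unfolding wsig_def by (simp del: upt_Suc)

lemma wsig_Suc: "wsig \<sigma> (Suc n) = \<sigma> (- int (Suc n)) # wsig \<sigma> n"
proof (rule nth_equalityI)
  show "length (wsig \<sigma> (Suc n)) = length (\<sigma> (- int (Suc n)) # wsig \<sigma> n)" by simp
  fix k assume "k < length (wsig \<sigma> (Suc n))"
  then have k: "k < Suc (Suc n)" by simp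
  show "wsig \<sigma> (Suc n) ! k = (\<sigma> (- int (Suc n)) # wsig \<sigma> n) ! k"
  proof (cases k)
    case 0 then show ?thesis using nth_wsig[OF k] by simp
  next
    case (Suc j)
    then have "j < Suc n" using k by simp
    then show ?thesis using nth_wsig[OF k] nth_wsig[of j n \<sigma>] Suc by simp
  qed
qed

lemma wsig_0: "wsig \<sigma> 0 = [\<sigma> 0]" by (simp add: wsig_def)

lemma hd_wsig: "hd (wsig \<sigma> n) = \<sigma> (- int n)"
proof -
  have "wsig \<sigma> n \<noteq> []" using length_wsig[of \<sigma> n] by (metis length_0_conv nat.distinct(1))
  then show ?thesis using nth_wsig[of 0 n \<sigma>] by (simp add: hd_conv_nth)
qed

lemma tl_wsig: "tl (wsig \<sigma> (Suc n)) = wsig \<sigma> n" by (simp add: wsig_Suc)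

lemma wcomp_wl: "wcomp w \<sigma> n z = wl w (wsig \<sigma> n) z"
  by (induction n arbitrary: z) (simp_all add: wsig_0 wsig_Suc)

lemma Y_Yw: "Y ii w zs \<sigma> n = Yw ii w zs (wsig \<sigma> n)"
  unfolding Y_def Yw_def by (simp add: wcomp_wl hd_wsig)

lemma Dw_wsig: "Dw ii w xs ys (wsig \<sigma> (Suc n)) = dist (Y ii w xs \<sigma> (Suc n)) (Y ii w xs \<sigma> n)
   + dist (Y ii w ys \<sigma> (Suc n)) (Y ii w ys \<sigma> n) + dist (Y ii w xs \<sigma> n) (Y ii w ys \<sigma> n)"
  unfolding Dw_def Y_Yw tl_wsig ..

lemma wsig_local: "(\<And>j. - int n \<le> j \<Longrightarrow> j \<le> 0 \<Longrightarrow> \<sigma> j = \<sigma>' j) \<Longrightarrow> wsig \<sigma> n = wsig \<sigma>' n"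
  unfolding wsig_def by (auto intro!: map_cong)

lemma cyl_wsig: "length es = Suc M \<Longrightarrow> \<sigma> \<in> cyl (- int M) es \<longleftrightarrow> wsig \<sigma> M = es"
proof
  assume l: "length es = Suc M" and c: "\<sigma> \<in> cyl (- int M) es"
  show "wsig \<sigma> M = es"
  proof (rule nth_equalityI)
    fix k assume "k < length (wsig \<sigma> M)"
    then have k: "k < Suc M" by simp
    have "\<sigma> (- int M + int k) = es ! k" using c k l unfolding cyl_def by auto
    moreover have "- int M + int k = int k - int M" by simp
    ultimately show "wsig \<sigma> M ! k = es ! k" using nth_wsig[OF k, of \<sigma>] by simp
  qed (use l in simp)
next
  assume l: "length es = Suc M" and c: "wsig \<sigma> M = es"
  show "\<sigma> \<in> cyl (- int M) es" unfolding cyl_def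
  proof (safe)
    fix k assume "k < length es"
    then have k: "k < Suc M" using l by simp
    have "- int M + int k = int k - int M" by simp
    then show "\<sigma> (- int M + int k) = es ! k" using nth_wsig[OF k, of \<sigma>] c by simp
  qed
qed

lemma drop_wsig: "n \<le> M \<Longrightarrow> drop (M - n) (wsig \<sigma> M) = wsig \<sigma> n"
proof (rule nth_equalityI)
  assume nM: "n \<le> M"
  show "length (drop (M - n) (wsig \<sigma> M)) = length (wsig \<sigma> n)" using nM by simp
  fix k assume "k < length (drop (M - n) (wsig \<sigma> M))"
  then have k: "k < Suc n" using nM by simp
  have "drop (M - n) (wsig \<sigma> M) ! k = wsig \<sigma> M ! (M - n + k)" using nM k by (simp add: nth_drop)
  also have "\<dots> = \<sigma> (int (M - n + k) - int M)" using nM k by (intro nth_wsig) simp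
  also have "\<dots> = \<sigma> (int k - int n)" using nM by (simp add: of_nat_diff)
  also have "\<dots> = wsig \<sigma> n ! k" by (rule nth_wsig[OF k, symmetric])
  finally show "drop (M - n) (wsig \<sigma> M) ! k = wsig \<sigma> n ! k" .
qed

context probs begin

lemma event_union:
  fixes P :: "'e list \<Rightarrow> bool"
  assumes nM: "n \<le> M"
  shows "{\<sigma>. P (wsig \<sigma> n)} = (\<Union>es\<in>{es\<in>words (Suc M). P (drop (M - n) es)}. cyl (- int M) es)"
proof (intro equalityI subsetI)
  fix \<sigma> assume H: "\<sigma> \<in> {\<sigma>. P (wsig \<sigma> n)}"
  have e1: "drop (M - n) (wsig \<sigma> M) = wsig \<sigma> n" by (rule drop_wsig[OF nM])
  have "wsig \<sigma> M \<in> {es\<in>words (Suc M). P (drop (M - n) es)}" using H e1 by (simp add: words_def)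
  moreover have "\<sigma> \<in> cyl (- int M) (wsig \<sigma> M)" using cyl_wsig[of "wsig \<sigma> M" M \<sigma>] by simp
  ultimately
  show "\<sigma> \<in> (\<Union>es\<in>{es\<in>words (Suc M). P (drop (M - n) es)}. cyl (- int M) es)" by blast
next
  fix \<sigma> assume "\<sigma> \<in> (\<Union>es\<in>{es\<in>words (Suc M). P (drop (M - n) es)}. cyl (- int M) es)"
  then obtain es where es: "es \<in> words (Suc M)" "P (drop (M - n) es)" "\<sigma> \<in> cyl (- int M) es" by blast
  then have "wsig \<sigma> M = es" using cyl_wsig[of es M \<sigma>] by (simp add: words_def)
  then have "P (wsig \<sigma> n)" using es(2) drop_wsig[OF nM, of \<sigma>] by simp
  then show "\<sigma> \<in> {\<sigma>. P (wsig \<sigma> n)}" by simp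
qed

lemma event_sets:
  fixes P :: "'e list \<Rightarrow> bool"
  assumes nM: "n \<le> M"
  shows "{\<sigma>. P (wsig \<sigma> n)} \<in> Asig (- int M)"
proof -
  have props: "sets (Pm w p (- int M) x) = Asig (- int M)" using Pm_props by blast
  have "(\<Union>es\<in>{es\<in>words (Suc M). P (drop (M - n) es)}. cyl (- int M) es) \<in> sets (Pm w p (- int M) x)"
  proof (rule sets.finite_UN)
    show "finite {es\<in>words (Suc M). P (drop (M - n) es)}" by (rule finite_subset[OF _ finite_words]) auto
    fix es assume "es \<in> {es\<in>words (Suc M). P (drop (M - n) es)}"
    then have "es \<noteq> []" by (auto simp: words_def)
    then show "cyl (- int M) es \<in> sets (Pm w p (- int M) x)" unfolding props Asig_def by (auto intro: sigma_sets.Basic)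
  qed
  then show ?thesis using event_union[OF nM] props by simp
qed

lemma event_measure:
  fixes P :: "'e list \<Rightarrow> bool"
  assumes nM: "n \<le> M"
  shows "emeasure (Pm w p (- int M) x) {\<sigma>. P (wsig \<sigma> n)} =
     ennreal (\<Sum>es\<in>{es\<in>words (Suc M). P (drop (M - n) es)}. pweight w p es x)"
proof -
  let ?S = "{es\<in>words (Suc M). P (drop (M - n) es)}"
  have props: "prob_space (Pm w p (- int M) x)" "sets (Pm w p (- int M) x) = Asig (- int M)"
     "\<And>es. es \<noteq> [] \<Longrightarrow> measure (Pm w p (- int M) x) (cyl (- int M) es) = pweight w p es x"
    using Pm_props by blast+
  interpret P: prob_space "Pm w p (- int M) x" by (rule props(1))
  have cs: "cyl (- int M) es \<in> sets (Pm w p (- int M) x)" if "es \<in> ?S" for es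
  proof -
    have "es \<noteq> []" using that by (auto simp: words_def)
    then show ?thesis unfolding props Asig_def by (auto intro: sigma_sets.Basic)
  qed
  have disj: "disjoint_family_on (\<lambda>es. cyl (- int M) es) ?S"
    unfolding disjoint_family_on_def
  proof (intro ballI impI)
    fix es es' assume "es \<in> ?S" "es' \<in> ?S" "es \<noteq> es'"
    then show "cyl (- int M) es \<inter> cyl (- int M) es' = {}" using cyl_wsig[of es M] cyl_wsig[of es' M]
      by (auto simp: words_def)
  qed
  have "emeasure (Pm w p (- int M) x) {\<sigma>. P (wsig \<sigma> n)} = emeasure (Pm w p (- int M) x) (\<Union>es\<in>?S. cyl (- int M) es)"
    using event_union[OF nM] by simp
  also have "\<dots> = (\<Sum>es\<in>?S. emeasure (Pm w p (- int M) x) (cyl (- int M) es))"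
  proof (rule sum_emeasure[symmetric])
    show "finite ?S" by (rule finite_subset[OF _ finite_words]) auto
  qed (use cs disj in auto)
  also have "\<dots> = (\<Sum>es\<in>?S. ennreal (pweight w p es x))"
  proof (rule sum.cong)
    fix es assume "es \<in> ?S"
    then have "es \<noteq> []" by (auto simp: words_def)
    then show "emeasure (Pm w p (- int M) x) (cyl (- int M) es) = ennreal (pweight w p es x)"
      using props(3) P.emeasure_eq_measure by simp
  qed simp
  also have "\<dots> = ennreal (\<Sum>es\<in>?S. pweight w p es x)" using pweight_nn by simp
  finally show ?thesis .
qed

lemma markov:
  assumes r: "0 < r" and D: "\<And>es. 0 \<le> D es"
  shows "(\<Sum>es\<in>{es\<in>words k. r < D es}. pweight w p es x) \<le> EE w p k x D / r"
proof -
  have "(\<Sum>es\<in>{es\<in>words k. r < D es}. pweight w p es x) = (\<Sum>es\<in>words k. if r < D es then pweight w p es x else 0)"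
    by (rule sum.inter_filter[OF finite_words])
  also have "\<dots> \<le> (\<Sum>es\<in>words k. pweight w p es x * D es / r)"
  proof (rule sum_mono)
    fix es
    show "(if r < D es then pweight w p es x else 0) \<le> pweight w p es x * D es / r"
    proof (cases "r < D es")
      case True
      then have "pweight w p es x * 1 \<le> pweight w p es x * (D es / r)" using r pweight_nn[of w es x]
        by (intro mult_left_mono) auto
      then show ?thesis using True by simp
    next
      case False then show ?thesis using r D[of es] pweight_nn[of w es x] by simp
    qed
  qed
  also have "\<dots> = EE w p k x D / r" unfolding EE_def by (simp add: sum_divide_distrib)
  finally show ?thesis .
qed

end



lemma dprime_cases:
  assumes "s \<noteq> t"
  shows "\<exists>G. dprime s t = (1/2)^G \<and> (\<forall>j. \<bar>j\<bar> < int G \<longrightarrow> s j = t j)"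
proof -
  obtain j0 where j0: "s j0 \<noteq> t j0" using assms by blast
  let ?P = "\<lambda>k::nat. \<forall>j::int. \<bar>j\<bar> < int k \<longrightarrow> s j = t j"
  have P0: "?P 0" by simp
  have bound: "y \<le> nat \<bar>j0\<bar>" if "?P y" for y
  proof (rule ccontr)
    assume "\<not> y \<le> nat \<bar>j0\<bar>"
    then have "\<bar>j0\<bar> < int y" by simp
    then show False using that j0 by blast
  qed
  have "?P (Greatest ?P)" by (rule GreatestI_nat[where P="?P" and k=0 and b="nat \<bar>j0\<bar>", OF P0 bound])
  moreover have "dprime s t = (1/2)^(Greatest ?P)" unfolding dprime_def using assms by simp
  ultimately show ?thesis by blast
qed

lemma dprime_agree:
  assumes "dprime s t < (1/2)^K" "\<bar>j\<bar> \<le> int K"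
  shows "s j = t j"
proof (cases "s = t")
  case False
  then obtain G where G: "dprime s t = (1/2)^G" "\<forall>j. \<bar>j\<bar> < int G \<longrightarrow> s j = t j"
    using dprime_cases by blast
  then have "K < G" using assms(1) by simp
  then show ?thesis using G(2) assms(2) by auto
qed simp

lemma cauchy_geom:
  fixes f :: "nat \<Rightarrow> 'a::complete_space" and b :: real
  assumes b: "0 < b" "b < 1" and H: "\<And>n. k \<le> n \<Longrightarrow> dist (f (Suc n)) (f n) \<le> b^n"
  shows "convergent f" and "\<And>n. k \<le> n \<Longrightarrow> dist (lim f) (f n) \<le> b^n / (1-b)"
proof -
  have D: "dist (f (n + d)) (f n) \<le> (b^n - b^(n+d)) / (1-b)" if n: "k \<le> n" for n d
  proof (induction d)
    case 0 then show ?case by simp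
  next
    case (Suc d)
    have "dist (f (n + Suc d)) (f n) \<le> dist (f (Suc (n + d))) (f (n + d)) + dist (f (n + d)) (f n)"
      by (simp add: dist_triangle)
    also have "\<dots> \<le> b^(n+d) + (b^n - b^(n+d)) / (1-b)" using H[of "n+d"] n Suc by simp
    also have "\<dots> = (b^n - b^(n + Suc d)) / (1-b)" using b by (simp add: field_simps)
    finally show ?case .
  qed
  have D2: "dist (f m) (f n) \<le> b^n / (1-b)" if "k \<le> n" "n \<le> m" for n m
  proof -
    obtain d where m: "m = n + d" using \<open>n \<le> m\<close> le_Suc_ex by blast
    have "(b^n - b^(n+d)) / (1-b) \<le> b^n / (1-b)" using b by (simp add: divide_right_mono)
    then show ?thesis using D[OF that(1), of d] m by simp
  qed
  have C: "Cauchy f"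
  proof (rule metric_CauchyI)
    fix e :: real assume e: "0 < e"
    have "(\<lambda>n. b^n / (1-b)) \<longlonglongrightarrow> 0 / (1-b)" using b by (intro tendsto_intros) auto
    then have "eventually (\<lambda>n. b^n / (1-b) < e) sequentially" using e by (intro order_tendstoD(2)) auto
    then obtain M0 where M0: "\<And>n. n \<ge> M0 \<Longrightarrow> b^n / (1-b) < e" by (auto simp: eventually_sequentially)
    show "\<exists>M. \<forall>m\<ge>M. \<forall>n\<ge>M. dist (f m) (f n) < e"
    proof (intro exI allI impI)
      fix m n assume mn: "max M0 k \<le> m" "max M0 k \<le> n"
      show "dist (f m) (f n) < e"
      proof (cases "n \<le> m")
        case True then show ?thesis using D2[of n m] M0[of n] mn by auto
      next
        case False then show ?thesis using D2[of m n] M0[of m] mn by (auto simp: dist_commute)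
      qed
    qed
  qed
  then show cf: "convergent f" by (simp add: Cauchy_convergent_iff)
  fix n assume n: "k \<le> n"
  have "f \<longlonglongrightarrow> lim f" using cf by (simp add: convergent_LIMSEQ_iff)
  then have "(\<lambda>m. dist (f m) (f n)) \<longlonglongrightarrow> dist (lim f) (f n)" by (intro tendsto_intros)
  then show "dist (lim f) (f n) \<le> b^n / (1-b)"
    by (rule LIMSEQ_le_const2) (use D2 n in auto)
qed

lemma suminf_reindex_ennreal:
  fixes f :: "nat \<Rightarrow> ennreal"
  assumes h: "strict_mono h" and z: "\<And>j. j \<notin> range h \<Longrightarrow> f j = 0"
  shows "(\<Sum>j. f j) = (\<Sum>n. f (h n))"
proof -
  have "(\<Sum>j. f j) = (\<integral>\<^sup>+j. f j \<partial>count_space UNIV)" by (simp add: nn_integral_count_space_nat)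
  also have "\<dots> = (\<integral>\<^sup>+j. f j * indicator (range h) j \<partial>count_space UNIV)"
    by (intro nn_integral_cong) (auto simp: z split: split_indicator)
  also have "\<dots> = (\<integral>\<^sup>+j. f j \<partial>count_space (range h))"
    by (subst nn_integral_count_space_indicator) auto
  also have "\<dots> = (\<integral>\<^sup>+n. f (h n) \<partial>count_space UNIV)"
    using strict_mono_imp_inj_on[OF h] by (intro nn_integral_bij_count_space[symmetric]) (simp add: bij_betw_def)
  also have "\<dots> = (\<Sum>n. f (h n))" by (simp add: nn_integral_count_space_nat)
  finally show ?thesis .
qed

lemma Phi_mono: "B \<subseteq> B' \<Longrightarrow> Phi w p \<nu> B \<le> Phi w p \<nu> B'"
  unfolding Phi_def by (rule INF_superset_mono) auto

lemma Phi_le: "(\<And>n. A n \<in> Asig (- int n)) \<Longrightarrow> B \<subseteq> (\<Union>n. A n) \<Longrightarrow> Phi w p \<nu> B \<le> (\<Sum>n. Phim w p \<nu> (- int n) (A n))"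
  unfolding Phi_def by (rule INF_lower) auto




locale cmsx = cmsl N ii tt Kp w p a for N ii tt Kp w p a +
  fixes xs ys :: "nat \<Rightarrow> 'a::complete_space" and \<nu> :: "'a measure"
  assumes xs_in: "\<forall>i\<in>{1..N}. xs i \<in> Kp i" and ys_in: "\<forall>i\<in>{1..N}. ys i \<in> Kp i"
    and nu_prob: "prob_space \<nu>" and nu_sets: "sets \<nu> = sets borel"
begin

definition "bb = sqrt a"
definition "Dx x = Dist Kp N xs x + Dist Kp N ys x"
definition "c1 = 3 * ((cst w ii tt xs + cst w ii tt ys) * (1/(1-a) + 1))"
definition "bad n = {\<sigma>. bb^n < Dw ii w xs ys (wsig \<sigma> (Suc n))}"
definition "Q k = {\<sigma>. \<forall>n\<ge>k. Dw ii w xs ys (wsig \<sigma> (Suc n)) \<le> bb^n}"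
definition "rho g = (\<integral>\<^sup>+x. ennreal (min 1 (3 * a^g * Dx x)) \<partial>\<nu>)"
definition "G n = (LEAST g. rho g \<le> ennreal (bb^n))"
definition "Mlev n = G n + Suc n"

lemma bb_pos: "0 < bb" using a_pos unfolding bb_def by simp
lemma bb_lt1: "bb < 1" using a_lt1 a_pos unfolding bb_def by simp
lemma a_bb: "a = bb * bb" using a_pos unfolding bb_def by (simp add: real_sqrt_mult_self)

lemma c1_nn: "0 \<le> c1" unfolding c1_def using cst_nn[of w ii tt xs] cst_nn[of w ii tt ys] a_lt1 by simp

lemma Dx_nn: "0 \<le> Dx x" unfolding Dx_def using Dist_nn[of Kp N xs x] Dist_nn[of Kp N ys x] by simp

lemma real_ineq:
  assumes X: "0 \<le> X" and c: "0 \<le> c"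
  shows "3 * a^(Suc n) * (X + c) / bb^n \<le> 3 * X + 3 * c * bb^n"
proof -
  have bn: "0 < bb^n" "bb^n \<le> 1" using bb_pos bb_lt1 by (auto simp: power_le_one)
  have "a^(Suc n) \<le> a^n" using a_pos a_lt1 by (intro power_decreasing) auto
  also have "a^n = bb^n * bb^n" by (subst a_bb) (rule power_mult_distrib)
  finally have an: "a^(Suc n) \<le> bb^n * bb^n" .
  have "3 * a^(Suc n) * (X + c) / bb^n \<le> 3 * (bb^n * bb^n) * (X + c) / bb^n"
    using an X c bn by (intro divide_right_mono mult_right_mono mult_left_mono) auto
  also have "\<dots> = 3 * bb^n * X + 3 * c * bb^n"
  proof -
    have ne: "bb^n \<noteq> 0" using bn(1) by (metis less_irrefl)
    have e1: "3 * (bb^n * bb^n) * (X + c) = (3 * bb^n * X + 3 * c * bb^n) * bb^n" by (simp add: algebra_simps)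
    show ?thesis unfolding e1 by (rule nonzero_mult_div_cancel_right[OF ne])
  qed
  also have "3 * bb^n * X \<le> 3 * X" using bn X by (simp add: mult_left_le_one_le)
  finally show ?thesis by simp
qed

lemma pm_bound:
  "emeasure (Pm w p (- int (g + Suc n)) x) (bad n) \<le> ennreal (min 1 (3 * a^g * Dx x)) + ennreal (c1 * bb^n)"
proof -
  let ?M = "g + Suc n"
  let ?P = "\<lambda>v. bb^n < Dw ii w xs ys v"
  let ?S = "(\<Sum>es\<in>{es\<in>words (Suc ?M). ?P (drop (?M - Suc n) es)}. pweight w p es x)"
  have "emeasure (Pm w p (- int ?M) x) {\<sigma>. ?P (wsig \<sigma> (Suc n))} = ennreal ?S"
    by (rule event_measure) simp
  then have em: "emeasure (Pm w p (- int ?M) x) (bad n) = ennreal ?S" unfolding bad_def by simp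
  have S_nn: "0 \<le> ?S" by (intro sum_nonneg pweight_nn)
  have "?S = (\<Sum>es\<in>{es\<in>words (Suc ?M). bb^n < Dw ii w xs ys (drop g es)}. pweight w p es x)" by simp
  also have "\<dots> \<le> EE w p (Suc ?M) x (\<lambda>es. Dw ii w xs ys (drop g es)) / bb^n"
    using bb_pos by (intro markov Dw_nn) simp
  also have "\<dots> \<le> 3 * a^(Suc n) * (a^g * (Dist Kp N xs x + Dist Kp N ys x) + (cst w ii tt xs + cst w ii tt ys) * (1/(1-a) + 1)) / bb^n"
    using level_bound[OF xs_in ys_in, of g n x] bb_pos by (intro divide_right_mono) simp_all
  also have "\<dots> \<le> 3 * (a^g * Dx x) + 3 * ((cst w ii tt xs + cst w ii tt ys) * (1/(1-a) + 1)) * bb^n"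
    unfolding Dx_def[symmetric]
    using Dx_nn[of x] a_pos cst_nn[of w ii tt xs] cst_nn[of w ii tt ys] a_lt1
    by (intro real_ineq) auto
  finally have S1: "?S \<le> 3 * a^g * Dx x + c1 * bb^n" unfolding c1_def by simp
  interpret P: prob_space "Pm w p (- int ?M) x" using Pm_props by blast
  have "ennreal ?S \<le> 1" using em P.emeasure_le_1 by metis
  then have S2: "?S \<le> 1" using S_nn by (simp add: ennreal_le_1)
  have cb: "0 \<le> c1 * bb^n" using c1_nn bb_pos by simp
  have "?S \<le> min 1 (3 * a^g * Dx x) + c1 * bb^n"
    using S1 S2 cb by (cases "3 * a^g * Dx x \<le> 1") auto
  then have "ennreal ?S \<le> ennreal (min 1 (3 * a^g * Dx x) + c1 * bb^n)" by (rule ennreal_leI)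
  also have "\<dots> = ennreal (min 1 (3 * a^g * Dx x)) + ennreal (c1 * bb^n)"
    using cb Dx_nn[of x] a_pos by (intro ennreal_plus) auto
  finally show ?thesis using em by simp
qed

end



context cmsx begin

lemma Dist_meas: "(\<lambda>x. Dist Kp N zs x) \<in> borel_measurable borel"
  unfolding Dist_def
proof (rule borel_measurable_sum)
  fix j assume j: "j \<in> {1..N}"
  have [measurable]: "Kp j \<in> sets borel" using Kp_borel[OF j] .
  have [measurable]: "(\<lambda>x. dist x (zs j)) \<in> borel_measurable borel"
    by (intro borel_measurable_continuous_onI continuous_intros)
  show "(\<lambda>x. indicator (Kp j) x * dist x (zs j)) \<in> borel_measurable borel" by measurable
qed

lemma Dx_meas[measurable]: "Dx \<in> borel_measurable \<nu>"
proof -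
  have "(\<lambda>x. Dx x) \<in> borel_measurable borel" unfolding Dx_def using Dist_meas by measurable
  moreover have "(borel_measurable \<nu> :: ('a \<Rightarrow> real) set) = borel_measurable borel" by (rule measurable_cong_sets[OF nu_sets refl])
  ultimately show ?thesis by simp
qed

lemma rho_tendsto: "rho \<longlonglongrightarrow> 0"
proof -
  interpret N: prob_space \<nu> by (rule nu_prob)
  have "(\<lambda>g. \<integral>\<^sup>+x. ennreal (min 1 (3 * a^g * Dx x)) \<partial>\<nu>) \<longlonglongrightarrow> (\<integral>\<^sup>+x. 0 \<partial>\<nu>)"
  proof (rule nn_integral_dominated_convergence[where w="\<lambda>_. 1"])
    show "(\<integral>\<^sup>+x. 1 \<partial>\<nu>) < \<infinity>" using N.emeasure_space_1 by simp
    show "AE x in \<nu>. (\<lambda>g. ennreal (min 1 (3 * a^g * Dx x))) \<longlonglongrightarrow> 0"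
    proof (rule AE_I2)
      fix x
      have "(\<lambda>g. 3 * a^g * Dx x) \<longlonglongrightarrow> 3 * 0 * Dx x" using a_pos a_lt1 by (intro tendsto_intros) simp
      then have "(\<lambda>g. min 1 (3 * a^g * Dx x)) \<longlonglongrightarrow> min 1 0" by (intro tendsto_intros) simp
      then have "(\<lambda>g. ennreal (min 1 (3 * a^g * Dx x))) \<longlonglongrightarrow> ennreal (min 1 0)" by (rule tendsto_ennrealI)
      then show "(\<lambda>g. ennreal (min 1 (3 * a^g * Dx x))) \<longlonglongrightarrow> 0" by simp
    qed
  qed (auto simp: ennreal_le_1)
  then show ?thesis unfolding rho_def[abs_def] by simp
qed

lemma G_ex: "\<exists>g. rho g \<le> ennreal (bb^n)"
proof -
  have "0 < ennreal (bb^n)" using bb_pos by simp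
  then have "eventually (\<lambda>g. rho g < ennreal (bb^n)) sequentially" by (rule order_tendstoD(2)[OF rho_tendsto])
  then obtain g where "rho g < ennreal (bb^n)" by (auto simp: eventually_sequentially)
  then show ?thesis by (auto intro: less_imp_le)
qed

lemma G_prop: "rho (G n) \<le> ennreal (bb^n)"
  unfolding G_def by (rule LeastI_ex[OF G_ex])

lemma G_mono: "G n \<le> G (Suc n)"
proof -
  have "rho (G (Suc n)) \<le> ennreal (bb^n)"
  proof -
    have "bb^Suc n \<le> bb^n" using bb_pos bb_lt1 by (intro power_decreasing) auto
    then show ?thesis using G_prop[of "Suc n"] by (meson ennreal_leI order_trans)
  qed
  then show ?thesis unfolding G_def[of n] by (rule Least_le)
qed

lemma Mlev_mono: "strict_mono Mlev"
  unfolding Mlev_def by (rule strict_mono_Suc_iff[THEN iffD2]) (simp add: G_mono le_imp_less_Suc)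

lemma Phim_empty: "Phim w p \<nu> m {} = 0" unfolding Phim_def by simp

lemma Phim_bad: "Phim w p \<nu> (- int (Mlev n)) (bad n) \<le> ennreal ((1 + c1) * bb^n)"
proof -
  interpret N: prob_space \<nu> by (rule nu_prob)
  have "Phim w p \<nu> (- int (Mlev n)) (bad n) \<le> (\<integral>\<^sup>+x. ennreal (min 1 (3 * a^(G n) * Dx x)) + ennreal (c1 * bb^n) \<partial>\<nu>)"
    unfolding Phim_def Mlev_def by (intro nn_integral_mono pm_bound)
  also have "\<dots> = rho (G n) + ennreal (c1 * bb^n)"
    unfolding rho_def by (subst nn_integral_add) (auto simp: N.emeasure_space_1)
  also have "\<dots> \<le> ennreal (bb^n) + ennreal (c1 * bb^n)" using G_prop by (intro add_right_mono)
  also have "\<dots> = ennreal ((1 + c1) * bb^n)"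
    using c1_nn bb_pos by (simp add: ennreal_plus[symmetric] distrib_right del: ennreal_plus)
  finally show ?thesis .
qed

lemma bad_sets: "bad n \<in> Asig (- int (Mlev n))"
  unfolding bad_def Mlev_def by (rule event_sets) simp

lemma beta_sums: "(\<lambda>n. if k \<le> n then (1 + c1) * bb^n else 0) sums ((1 + c1) * bb^k / (1 - bb))"
proof -
  let ?f = "\<lambda>n. if k \<le> n then (1 + c1) * bb^n else 0"
  have "(\<lambda>n. bb^n) sums (1 / (1 - bb))" using bb_pos bb_lt1 by (intro geometric_sums) simp
  then have s1: "(\<lambda>n. (1 + c1) * bb^k * bb^n) sums ((1 + c1) * bb^k * (1 / (1 - bb)))" by (rule sums_mult)
  have eq: "(\<lambda>n. ?f (n + k)) = (\<lambda>n. (1 + c1) * bb^k * bb^n)" by (auto simp: power_add mult_ac)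
  have s2: "(\<lambda>n. ?f (n + k)) sums ((1 + c1) * bb^k / (1 - bb))" unfolding eq using s1 by simp
  have s3: "?f sums ((1 + c1) * bb^k / (1 - bb) + (\<Sum>i<k. ?f i))" using sums_iff_shift[of ?f k] s2 by blast
  have "(\<Sum>i<k. ?f i) = 0" by simp
  then show ?thesis using s3 by simp
qed

lemma Phi_Q: "Phi w p \<nu> (UNIV - Q k) \<le> ennreal ((1 + c1) * bb^k / (1 - bb))"
proof -
  have inj: "inj Mlev" using Mlev_mono strict_mono_imp_inj_on by blast
  define A where "A j = (if \<exists>n. k \<le> n \<and> Mlev n = j then bad (THE n. Mlev n = j) else {})" for j
  have AM: "A (Mlev n) = (if k \<le> n then bad n else {})" for n
  proof -
    have "(THE n'. Mlev n' = Mlev n) = n" using inj by (auto intro!: the_equality dest: injD)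
    moreover have "(\<exists>n'. k \<le> n' \<and> Mlev n' = Mlev n) \<longleftrightarrow> k \<le> n" using inj by (auto dest: injD)
    ultimately show ?thesis unfolding A_def by simp
  qed
  have A0: "A j = {}" if "j \<notin> range Mlev" for j using that unfolding A_def by auto
  have As: "A j \<in> Asig (- int j)" for j
  proof (cases "j \<in> range Mlev")
    case True
    then obtain n where n: "j = Mlev n" by blast
    show ?thesis using bad_sets[of n] unfolding n AM by (auto simp: Asig_def intro: sigma_sets.Empty)
  next
    case False then show ?thesis using A0 by (simp add: Asig_def sigma_sets.Empty)
  qed
  have cov: "UNIV - Q k \<subseteq> (\<Union>j. A j)"
  proof
    fix \<sigma> assume "\<sigma> \<in> UNIV - Q k"
    then obtain n where n: "k \<le> n" "\<sigma> \<in> bad n" unfolding Q_def bad_def by (auto simp: not_le)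
    then have "\<sigma> \<in> A (Mlev n)" using AM by simp
    then show "\<sigma> \<in> (\<Union>j. A j)" by blast
  qed
  have "Phi w p \<nu> (UNIV - Q k) \<le> (\<Sum>j. Phim w p \<nu> (- int j) (A j))" by (rule Phi_le[OF As cov])
  also have "\<dots> = (\<Sum>n. Phim w p \<nu> (- int (Mlev n)) (A (Mlev n)))"
    by (rule suminf_reindex_ennreal[OF Mlev_mono, where f="\<lambda>j. Phim w p \<nu> (- int j) (A j)"]) (simp add: A0 Phim_empty)
  also have "\<dots> \<le> (\<Sum>n. ennreal (if k \<le> n then (1 + c1) * bb^n else 0))"
  proof (rule suminf_le)
    fix n show "Phim w p \<nu> (- int (Mlev n)) (A (Mlev n)) \<le> ennreal (if k \<le> n then (1 + c1) * bb^n else 0)"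
      using Phim_bad[of n] by (simp add: AM Phim_empty)
  qed auto
  also have "\<dots> = ennreal ((1 + c1) * bb^k / (1 - bb))"
    using beta_sums[of k] c1_nn bb_pos bb_lt1
    by (subst suminf_ennreal2) (auto simp: sums_iff)
  finally show ?thesis .
qed

lemma Phi_Q_tendsto: "(\<lambda>k. Phi w p \<nu> (UNIV - Q k)) \<longlonglongrightarrow> 0"
proof (rule tendsto_sandwich[of "\<lambda>_. 0" _ _ "\<lambda>k. ennreal ((1 + c1) * bb^k / (1 - bb))"])
  show "(\<lambda>k. ennreal ((1 + c1) * bb^k / (1 - bb))) \<longlonglongrightarrow> 0"
  proof -
    have "(\<lambda>k. (1 + c1) * bb^k / (1 - bb)) \<longlonglongrightarrow> (1 + c1) * 0 / (1 - bb)"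
      using bb_pos bb_lt1 by (intro tendsto_intros) auto
    then have "(\<lambda>k. ennreal ((1 + c1) * bb^k / (1 - bb))) \<longlonglongrightarrow> ennreal ((1 + c1) * 0 / (1 - bb))"
      by (rule tendsto_ennrealI)
    then show ?thesis by simp
  qed
qed (auto simp: Phi_Q)

end



context cmsx begin

lemma Q_mono: "Q k \<subseteq> Q (Suc k)" unfolding Q_def by auto

lemma Q_closed: "dprime_closed (Q k)"
  unfolding dprime_closed_def
proof (intro allI impI)
  fix s \<sigma> assume sQ: "\<forall>n. s n \<in> Q k" and lim: "(\<lambda>n. dprime (s n) \<sigma>) \<longlonglongrightarrow> 0"
  show "\<sigma> \<in> Q k" unfolding Q_def
  proof (safe)
    fix n assume n: "k \<le> n"
    have "0 < ((1::real)/2)^(Suc n)" by simp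
    then have "eventually (\<lambda>i. dprime (s i) \<sigma> < (1/2)^(Suc n)) sequentially" by (rule order_tendstoD(2)[OF lim])
    then obtain i where i: "dprime (s i) \<sigma> < (1/2)^(Suc n)" by (auto simp: eventually_sequentially)
    have "wsig (s i) (Suc n) = wsig \<sigma> (Suc n)"
    proof (rule wsig_local)
      fix j :: int assume "- int (Suc n) \<le> j" "j \<le> 0"
      then have "\<bar>j\<bar> \<le> int (Suc n)" by simp
      then show "s i j = \<sigma> j" by (rule dprime_agree[OF i])
    qed
    moreover have "Dw ii w xs ys (wsig (s i) (Suc n)) \<le> bb^n" using sQ n unfolding Q_def by blast
    ultimately show "Dw ii w xs ys (wsig \<sigma> (Suc n)) \<le> bb^n" by simp
  qed
qed

lemma Q_dists:
  assumes "\<sigma> \<in> Q k" "k \<le> n"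
  shows "dist (Y ii w xs \<sigma> (Suc n)) (Y ii w xs \<sigma> n) \<le> bb^n"
    and "dist (Y ii w ys \<sigma> (Suc n)) (Y ii w ys \<sigma> n) \<le> bb^n"
    and "dist (Y ii w xs \<sigma> n) (Y ii w ys \<sigma> n) \<le> bb^n"
proof -
  have "Dw ii w xs ys (wsig \<sigma> (Suc n)) \<le> bb^n" using assms unfolding Q_def by auto
  then have H: "dist (Y ii w xs \<sigma> (Suc n)) (Y ii w xs \<sigma> n) + dist (Y ii w ys \<sigma> (Suc n)) (Y ii w ys \<sigma> n)
     + dist (Y ii w xs \<sigma> n) (Y ii w ys \<sigma> n) \<le> bb^n" unfolding Dw_wsig .
  have "0 \<le> dist (Y ii w xs \<sigma> (Suc n)) (Y ii w xs \<sigma> n)" "0 \<le> dist (Y ii w ys \<sigma> (Suc n)) (Y ii w ys \<sigma> n)"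
     "0 \<le> dist (Y ii w xs \<sigma> n) (Y ii w ys \<sigma> n)" by simp_all
  then show "dist (Y ii w xs \<sigma> (Suc n)) (Y ii w xs \<sigma> n) \<le> bb^n"
    and "dist (Y ii w ys \<sigma> (Suc n)) (Y ii w ys \<sigma> n) \<le> bb^n"
    and "dist (Y ii w xs \<sigma> n) (Y ii w ys \<sigma> n) \<le> bb^n" using H by linarith+
qed

lemma Q_conv_x: "\<sigma> \<in> Q k \<Longrightarrow> convergent (Y ii w xs \<sigma>)"
  and Q_lim_x: "\<sigma> \<in> Q k \<Longrightarrow> k \<le> n \<Longrightarrow> dist (lim (Y ii w xs \<sigma>)) (Y ii w xs \<sigma> n) \<le> bb^n / (1 - bb)"
  using cauchy_geom[OF bb_pos bb_lt1, of k "Y ii w xs \<sigma>"] Q_dists(1) by blast+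

lemma Q_conv_y: "\<sigma> \<in> Q k \<Longrightarrow> convergent (Y ii w ys \<sigma>)"
  and Q_lim_y: "\<sigma> \<in> Q k \<Longrightarrow> k \<le> n \<Longrightarrow> dist (lim (Y ii w ys \<sigma>)) (Y ii w ys \<sigma> n) \<le> bb^n / (1 - bb)"
  using cauchy_geom[OF bb_pos bb_lt1, of k "Y ii w ys \<sigma>"] Q_dists(2) by blast+

lemma Q_lim_eq: assumes "\<sigma> \<in> Q k" shows "lim (Y ii w xs \<sigma>) = lim (Y ii w ys \<sigma>)"
proof -
  let ?d = "dist (lim (Y ii w xs \<sigma>)) (lim (Y ii w ys \<sigma>))"
  have b: "?d \<le> (2 / (1 - bb) + 1) * bb^n" if n: "k \<le> n" for n
  proof -
    have "?d \<le> dist (lim (Y ii w xs \<sigma>)) (Y ii w xs \<sigma> n) + dist (Y ii w xs \<sigma> n) (Y ii w ys \<sigma> n)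
        + dist (lim (Y ii w ys \<sigma>)) (Y ii w ys \<sigma> n)"
      using dist_triangle[of "lim (Y ii w xs \<sigma>)" "lim (Y ii w ys \<sigma>)" "Y ii w xs \<sigma> n"]
        dist_triangle[of "Y ii w xs \<sigma> n" "lim (Y ii w ys \<sigma>)" "Y ii w ys \<sigma> n"]
      by (simp add: dist_commute)
    also have "\<dots> \<le> bb^n / (1 - bb) + bb^n + bb^n / (1 - bb)"
      using Q_lim_x[OF assms n] Q_lim_y[OF assms n] Q_dists(3)[OF assms n] by linarith
    also have "\<dots> = (2 / (1 - bb) + 1) * bb^n" by (simp add: field_simps)
    finally show ?thesis .
  qed
  have "(\<lambda>n. (2 / (1 - bb) + 1) * bb^n) \<longlonglongrightarrow> (2 / (1 - bb) + 1) * 0"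
    using bb_pos bb_lt1 by (intro tendsto_intros) auto
  then have "?d \<le> (2 / (1 - bb) + 1) * 0" by (rule LIMSEQ_le_const) (use b in auto)
  then show ?thesis by simp
qed

definition "alpha = ln bb / ln (1/2)"
definition "CC = 2 / (bb * (1 - bb))"

lemma alpha_pos: "0 < alpha"
  unfolding alpha_def using bb_pos bb_lt1 by (intro divide_neg_neg) auto

lemma CC_pos: "0 < CC" unfolding CC_def using bb_pos bb_lt1 by simp

lemma powr_half: "((1/2::real)^GG) powr alpha = bb^GG"
proof -
  have h: "(1/2::real) powr alpha = bb"
    unfolding alpha_def powr_def using bb_pos by simp
  have "((1/2::real)^GG) powr alpha = ((1/2) powr real GG) powr alpha" by (simp add: powr_realpow)
  also have "\<dots> = ((1/2) powr alpha) powr real GG" by (simp add: powr_powr mult.commute)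
  also have "\<dots> = bb^GG" using h bb_pos by (simp add: powr_realpow)
  finally show ?thesis .
qed

lemma holder:
  assumes s: "\<sigma> \<in> Q k" and s': "\<sigma>' \<in> Q k" and d: "dprime \<sigma> \<sigma>' \<le> (1/2)^(Suc k)"
  shows "dist (lim (Y ii w xs \<sigma>)) (lim (Y ii w xs \<sigma>')) \<le> CC * dprime \<sigma> \<sigma>' powr alpha"
proof (cases "\<sigma> = \<sigma>'")
  case True then show ?thesis by (simp add: dprime_def)
next
  case False
  then obtain GG where GG: "dprime \<sigma> \<sigma>' = (1/2)^GG" "\<forall>j. \<bar>j\<bar> < int GG \<longrightarrow> \<sigma> j = \<sigma>' j"
    using dprime_cases by blast
  have h: "(1/2::real)^GG \<le> (1/2)^(Suc k)" using d GG(1) by simp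
  have iff: "((1/2::real)^GG \<le> (1/2)^(Suc k)) = (Suc k \<le> GG)" by (rule power_decreasing_iff) auto
  have "Suc k \<le> GG" using h iff by blast
  then obtain n where n: "GG = Suc n" "k \<le> n" by (metis Suc_le_D Suc_le_mono)
  have "wsig \<sigma> n = wsig \<sigma>' n"
  proof (rule wsig_local)
    fix j :: int assume "- int n \<le> j" "j \<le> 0"
    then have "\<bar>j\<bar> < int GG" using n by simp
    then show "\<sigma> j = \<sigma>' j" using GG(2) by blast
  qed
  then have Yeq: "Y ii w xs \<sigma> n = Y ii w xs \<sigma>' n" by (simp add: Y_Yw)
  have "dist (lim (Y ii w xs \<sigma>)) (lim (Y ii w xs \<sigma>')) \<le> dist (lim (Y ii w xs \<sigma>)) (Y ii w xs \<sigma> n) + dist (lim (Y ii w xs \<sigma>')) (Y ii w xs \<sigma> n)"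
    by (rule dist_triangle2)
  also have "\<dots> \<le> bb^n / (1 - bb) + bb^n / (1 - bb)"
    using Q_lim_x[OF s n(2)] Q_lim_x[OF s' n(2)] Yeq by simp
  also have "\<dots> = CC * bb^GG"
  proof -
    have ne: "bb \<noteq> 0" "1 - bb \<noteq> 0" "bb \<noteq> 1" using bb_pos bb_lt1 by auto
    have "CC * bb^GG = (2 * bb^n * bb) / ((1 - bb) * bb)" unfolding CC_def n by (simp add: mult_ac)
    also have "\<dots> = 2 * bb^n / (1 - bb)" using ne by (rule_tac mult_divide_mult_cancel_right) simp
    also have "\<dots> = bb^n / (1 - bb) + bb^n / (1 - bb)" by (simp add: add_divide_distrib[symmetric])
    finally show ?thesis by simp
  qed
  also have "\<dots> = CC * dprime \<sigma> \<sigma>' powr alpha" by (simp add: GG(1) powr_half)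
  finally show ?thesis .
qed

lemma Phi_B: "Phi w p \<nu> (UNIV - (\<Union>k. Q k)) = 0"
proof -
  have "Phi w p \<nu> (UNIV - (\<Union>k. Q k)) \<le> 0"
  proof (rule LIMSEQ_le_const[OF Phi_Q_tendsto])
    show "\<exists>N. \<forall>n\<ge>N. Phi w p \<nu> (UNIV - (\<Union>k. Q k)) \<le> Phi w p \<nu> (UNIV - Q n)"
      by (intro exI allI impI Phi_mono) auto
  qed
  then show ?thesis by simp
qed

lemma main:
  shows "(\<exists>B. Phi w p \<nu> B = 0 \<and> (\<forall>\<sigma>. \<sigma> \<notin> B \<longrightarrow> convergent (Y ii w xs \<sigma>)))
       \<and> (\<exists>B. Phi w p \<nu> B = 0 \<and> (\<forall>\<sigma>. \<sigma> \<notin> B \<longrightarrow>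
              convergent (Y ii w xs \<sigma>) \<and> convergent (Y ii w ys \<sigma>) \<and> lim (Y ii w xs \<sigma>) = lim (Y ii w ys \<sigma>)))
       \<and> (\<exists>Q. \<exists>\<alpha> C :: real.
            (\<forall>k. dprime_closed (Q k)) \<and> (\<forall>k. Q k \<subseteq> Q (Suc k)) \<and>
            (\<lambda>k. Phi w p \<nu> (UNIV - Q k)) \<longlonglongrightarrow> 0 \<and> \<alpha> > 0 \<and> C > 0 \<and>
            (\<forall>k. \<exists>\<delta>k>0. (\<forall>\<sigma>\<in>Q k. convergent (Y ii w xs \<sigma>)) \<and>
               (\<forall>\<sigma>\<in>Q k. \<forall>\<sigma>'\<in>Q k. dprime \<sigma> \<sigma>' \<le> \<delta>k \<longrightarrow>
                  dist (lim (Y ii w xs \<sigma>)) (lim (Y ii w xs \<sigma>')) \<le> C * dprime \<sigma> \<sigma>' powr \<alpha>)))"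
proof (intro conjI)
  let ?B = "UNIV - (\<Union>k. Q k)"
  show "\<exists>B. Phi w p \<nu> B = 0 \<and> (\<forall>\<sigma>. \<sigma> \<notin> B \<longrightarrow> convergent (Y ii w xs \<sigma>))"
    using Phi_B Q_conv_x by blast
  show "\<exists>B. Phi w p \<nu> B = 0 \<and> (\<forall>\<sigma>. \<sigma> \<notin> B \<longrightarrow>
              convergent (Y ii w xs \<sigma>) \<and> convergent (Y ii w ys \<sigma>) \<and> lim (Y ii w xs \<sigma>) = lim (Y ii w ys \<sigma>))"
    using Phi_B Q_conv_x Q_conv_y Q_lim_eq by blast
  show "\<exists>Q. \<exists>\<alpha> C :: real.
            (\<forall>k. dprime_closed (Q k)) \<and> (\<forall>k. Q k \<subseteq> Q (Suc k)) \<and>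
            (\<lambda>k. Phi w p \<nu> (UNIV - Q k)) \<longlonglongrightarrow> 0 \<and> \<alpha> > 0 \<and> C > 0 \<and>
            (\<forall>k. \<exists>\<delta>k>0. (\<forall>\<sigma>\<in>Q k. convergent (Y ii w xs \<sigma>)) \<and>
               (\<forall>\<sigma>\<in>Q k. \<forall>\<sigma>'\<in>Q k. dprime \<sigma> \<sigma>' \<le> \<delta>k \<longrightarrow>
                  dist (lim (Y ii w xs \<sigma>)) (lim (Y ii w xs \<sigma>')) \<le> C * dprime \<sigma> \<sigma>' powr \<alpha>))"
  proof (rule exI[of _ Q], rule exI[of _ alpha], rule exI[of _ CC], intro conjI allI)
    show "dprime_closed (Q k)" for k by (rule Q_closed)
    show "Q k \<subseteq> Q (Suc k)" for k by (rule Q_mono)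
    show "(\<lambda>k. Phi w p \<nu> (UNIV - Q k)) \<longlonglongrightarrow> 0" by (rule Phi_Q_tendsto)
    show "0 < alpha" by (rule alpha_pos)
    show "0 < CC" by (rule CC_pos)
    fix k
    show "\<exists>\<delta>k>0. (\<forall>\<sigma>\<in>Q k. convergent (Y ii w xs \<sigma>)) \<and>
               (\<forall>\<sigma>\<in>Q k. \<forall>\<sigma>'\<in>Q k. dprime \<sigma> \<sigma>' \<le> \<delta>k \<longrightarrow>
                  dist (lim (Y ii w xs \<sigma>)) (lim (Y ii w xs \<sigma>')) \<le> CC * dprime \<sigma> \<sigma>' powr alpha)"
      by (rule exI[of _ "(1/2)^(Suc k)"]) (auto intro: Q_conv_x holder)
  qed
qed

end

theorem theorem1:
  fixes N :: nat and ii tt :: "'e::finite \<Rightarrow> nat" and Kp :: "nat \<Rightarrow> 'a::complete_space set"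
    and w :: "'e \<Rightarrow> 'a \<Rightarrow> 'a" and p :: "'e \<Rightarrow> 'a \<Rightarrow> real" and a \<delta> :: real
    and xs ys :: "nat \<Rightarrow> 'a" and \<nu> :: "'a measure"
  assumes "cms N ii tt Kp w p a"
    and "\<forall>e. dini_continuous_on (Kp (ii e)) (p e)"
    and "\<delta> > 0" and "\<forall>e. \<forall>x\<in>Kp (ii e). p e x \<ge> \<delta>"
    and "\<forall>i\<in>{1..N}. xs i \<in> Kp i \<and> ys i \<in> Kp i"
    and "prob_space \<nu>" and "sets \<nu> = sets borel"
  shows "(\<exists>B. Phi w p \<nu> B = 0 \<and> (\<forall>\<sigma>. \<sigma> \<notin> B \<longrightarrow> convergent (Y ii w xs \<sigma>)))
       \<and> (\<exists>B. Phi w p \<nu> B = 0 \<and> (\<forall>\<sigma>. \<sigma> \<notin> B \<longrightarrow>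
              convergent (Y ii w xs \<sigma>) \<and> convergent (Y ii w ys \<sigma>) \<and> lim (Y ii w xs \<sigma>) = lim (Y ii w ys \<sigma>)))
       \<and> (\<exists>Q :: nat \<Rightarrow> (int \<Rightarrow> 'e) set. \<exists>\<alpha> C :: real.
            (\<forall>k. dprime_closed (Q k)) \<and> (\<forall>k. Q k \<subseteq> Q (Suc k)) \<and>
            (\<lambda>k. Phi w p \<nu> (UNIV - Q k)) \<longlonglongrightarrow> 0 \<and> \<alpha> > 0 \<and> C > 0 \<and>
            (\<forall>k. \<exists>\<delta>k>0. (\<forall>\<sigma>\<in>Q k. convergent (Y ii w xs \<sigma>)) \<and>
               (\<forall>\<sigma>\<in>Q k. \<forall>\<sigma>'\<in>Q k. dprime \<sigma> \<sigma>' \<le> \<delta>k \<longrightarrow>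
                  dist (lim (Y ii w xs \<sigma>)) (lim (Y ii w xs \<sigma>')) \<le> C * dprime \<sigma> \<sigma>' powr \<alpha>)))"
  proof -
  have "cmsx N ii tt Kp w p a xs ys \<nu>"
    unfolding cmsx_def cmsx_axioms_def cmsl_def using assms(1,5,6,7) by blast
  then interpret cmsx N ii tt Kp w p a xs ys \<nu> .
  show ?thesis by (rule main)
qed

end
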